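(* Let $m\ge1$, $q=2^m$, let $n$ be odd, and let $L(x)=ax^{2^k}+bx^{2^l}$ with $a,b\in\mathbb F_{q^n}$ and integers $0\le k,l<mn$, such that $L$ is nonzero as a map on $\mathbb F_{q^n}$. Let $d=\gcd(l-k,mn)$ and $s=\gcd(k-1,m)$. (1) If $k\equiv l\pmod m$, then $\mathrm{Tr}(x^{q+1})+L(x)$ is a permutation polynomial of $\mathbb F_{q^n}$ if and only if either (a) $a+b\in\mathbb F_q^*$, $(a+b)^{\frac{q-1}{2^s-1}}\ne1$ and $a^{\frac{q^n-1}{2^d-1}}\ne b^{\frac{q^n-1}{2^d-1}}$; or (b) $a+b=0$, $d=m$ and $\mathrm{Tr}(a^{-1})\ne0$. (2) If $k\not\equiv l\pmod m$ and $l\equiv1\pmod m$, then $\mathrm{Tr}(x^{q+1})+L(x)$ is a permutation polynomial of $\mathbb F_{q^n}$ if and only if $a,b\in\mathbb F_q$, $a^{\frac{q-1}{2^s-1}}\ne(b+1)^{\frac{q-1}{2^s-1}}$, and either $a^{\frac{q^n-1}{2^d-1}}\ne b^{\frac{q^n-1}{2^d-1}}$, or $d$ divides $m$ and $a^{\frac{q-1}{2^d-1}}=b^{\frac{q-1}{2^d-1}}$. (3) In particular, if $b=0$, then $\mathrm{Tr}(x^{q+1})+ax^{2^k}$ is a permutation polynomial of $\mathbb F_{q^n}$ if and only if $a\in\mathbb F_q^*$ and $a^{\frac{q-1}{2^s-1}}\ne1$.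
   Context: $\mathrm{Tr}$ denotes the trace map of $\mathbb F_{q^n}$ over $\mathbb F_q$. Polynomials are regarded as maps on $\mathbb F_{q^n}$; a permutation polynomial of a field is one inducing a bijection of that field. *)

theory Defs
  imports Main
begin

definition Tr :: "nat \<Rightarrow> nat \<Rightarrow> 'a::field \<Rightarrow> 'a" where
  "Tr q n y = (\<Sum>i<n. y ^ (q ^ i))"

definition subF :: "nat \<Rightarrow> 'a::field set" where
  "subF q = {x. x ^ q = x}"

definition perm_poly :: "('a \<Rightarrow> 'a) \<Rightarrow> bool" where
  "perm_poly f \<longleftrightarrow> bij f"

end

theory Submission
  imports Defs "HOL-Algebra.Multiplicative_Group" "HOL-Computational_Algebra.Polynomial"
begin


definition cring_of :: "'a::field ring" where
  "cring_of = \<lparr>carrier = UNIV, monoid.mult = (*), one = 1, zero = 0, add = (+)\<rparr>"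

lemma field_cring_of: "field (cring_of :: 'a::field ring)"
proof -
  have cr: "cring (cring_of :: 'a ring)"
    by (unfold_locales) (auto simp: cring_of_def field_simps Units_def intro: exI[of _ "- _"])
  show ?thesis
  proof (rule cring.cring_fieldI[OF cr])
    show "Units cring_of = carrier cring_of - {\<zero>\<^bsub>cring_of\<^esub>}"
      apply (auto simp: cring_of_def Units_def)
      by (metis field_class.field_inverse mult.commute)
  qed
qed

lemma pow_cring_of: "x [^]\<^bsub>cring_of\<^esub> (i::nat) = (x::'a::field) ^ i"
  by (induct i) (auto simp: cring_of_def)

lemma gen_exists:
  shows "\<exists>g::'a::{finite,field}. (\<forall>x. x \<noteq> 0 \<longrightarrow> (\<exists>i. x = g ^ i)) \<and>
     (\<forall>i. g ^ i = 1 \<longleftrightarrow> (card (UNIV::'a set) - 1) dvd i)"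
proof -
  interpret R: field "cring_of :: 'a ring" by (rule field_cring_of)
  have fin: "finite (carrier (cring_of :: 'a ring))" by (simp add: cring_of_def)
  obtain a where a: "a \<in> carrier (mult_of (cring_of :: 'a ring))"
    and gen: "carrier (mult_of (cring_of :: 'a ring)) = {a[^]\<^bsub>cring_of\<^esub>i | i::nat . i \<in> UNIV}"
    using R.finite_field_mult_group_has_gen[OF fin] by blast
  interpret G: group "mult_of (cring_of :: 'a ring)" by (rule R.field_mult_group)
  have carr: "carrier (mult_of (cring_of :: 'a ring)) = UNIV - {0}"
    by (simp add: cring_of_def)
  have pw: "a [^]\<^bsub>mult_of cring_of\<^esub> (i::nat) = a ^ i" for i
    by (simp add: nat_pow_mult_of pow_cring_of)
  have one: "\<one>\<^bsub>mult_of (cring_of :: 'a ring)\<^esub> = 1" by (simp add: cring_of_def)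
  have gen': "UNIV - {0::'a} = {a ^ i | i::nat . i \<in> UNIV}"
    using gen carr by (simp add: pow_cring_of)
  have finG: "finite (carrier (mult_of (cring_of :: 'a ring)))" by (simp add: carr)
  have ordle: "G.ord a \<le> card (UNIV::'a set) - 1"
    using G.ord_le_group_order[OF finG a] by (simp add: Coset.order_def carr cring_of_def card_Diff_singleton)
  have "{a[^]\<^bsub>mult_of cring_of\<^esub> x | x. x \<in> (UNIV :: nat set)} = {a[^]\<^bsub>mult_of cring_of\<^esub>x | x. x \<in> {0 .. G.ord a - 1}}"
    by (rule G.ord_elems[OF finG a])
  hence "UNIV - {0::'a} = (\<lambda>x. a ^ x) ` {0 .. G.ord a - 1}"
    unfolding pw gen' by auto
  hence "card (UNIV - {0::'a}) \<le> card {0 .. G.ord a - 1}"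
    by (metis card_image_le finite_atLeastAtMost)
  moreover have "G.ord a \<ge> 1" using G.ord_ge_1[OF finG a] .
  ultimately have "card (UNIV::'a set) - 1 \<le> G.ord a"
    by (simp add: card_Diff_singleton)
  hence ord: "G.ord a = card (UNIV::'a set) - 1" using ordle by simp
  show ?thesis
  proof (intro exI[of _ a] conjI allI impI)
    fix x :: 'a assume "x \<noteq> 0"
    then show "\<exists>i. x = a ^ i" using gen' by auto
  next
    fix i
    show "a ^ i = 1 \<longleftrightarrow> (card (UNIV::'a set) - 1) dvd i"
      using G.pow_eq_id[OF a, of i] unfolding pw one ord by simp
  qed
qed


lemma pm1_dvd_int: "((x::int) - 1) dvd (x ^ n - 1)"
  using power_diff_1_eq[of x n] by (metis dvd_triv_left)

lemma two_pow_dvd_int: "((2::int) ^ b - 1) dvd (2 ^ (b * c) - 1)"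
  using pm1_dvd_int[of "2^b" c] by (simp add: power_mult)

lemma aux_lin_int: "(T::int) - 1 = Z * t \<Longrightarrow> P * T - 1 = (P - 1) + (P * t) * Z"
proof -
  assume "T - 1 = Z * t"
  then have "T = Z * t + 1" by simp
  then show ?thesis by (simp add: algebra_simps)
qed

lemma gcd_add_mult_int: "gcd ((X::int) + Y * Z) Z = gcd X Z"
  by (metis gcd.commute gcd_add_mult add.commute)

lemma gcd_two_pow_int: "gcd ((2::int) ^ a - 1) (2 ^ b - 1) = 2 ^ (gcd a b) - 1"
proof (induction a b rule: gcd_nat_induct)
  case (step m n)
  obtain t where t: "(2::int) ^ (n * (m div n)) - 1 = (2 ^ n - 1) * t"
    using two_pow_dvd_int[of n "m div n"] by (auto elim: dvdE)
  have m_eq: "(2::int) ^ m = 2 ^ (m mod n) * 2 ^ (n * (m div n))"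
    using power_add[of "2::int" "m mod n" "n * (m div n)"] by (simp only: mod_mult_div_eq)
  have "(2::int) ^ m - 1 = (2 ^ (m mod n) - 1) + (2 ^ (m mod n) * t) * (2 ^ n - 1)"
    unfolding m_eq by (rule aux_lin_int[OF t])
  then have "gcd ((2::int) ^ m - 1) (2 ^ n - 1) = gcd ((2 ^ (m mod n) - 1) + (2 ^ (m mod n) * t) * (2 ^ n - 1)) (2 ^ n - 1)"
    by (rule arg_cong[where f="\<lambda>z. gcd z (2 ^ n - 1)"])
  also have "\<dots> = gcd (2 ^ (m mod n) - 1) (2 ^ n - 1)"
    by (rule gcd_add_mult_int)
  also have "\<dots> = gcd (2 ^ n - 1) (2 ^ (m mod n) - 1)" by (rule gcd.commute)
  also have "\<dots> = 2 ^ gcd n (m mod n) - 1" by (rule step.IH)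
  also have "gcd n (m mod n) = gcd m n" by (simp add: gcd_red_nat[of m n] gcd.commute)
  finally show ?case .
qed simp

lemma gcd_pow_diff_aux:
  assumes "k \<le> l" and M: "M > 0"
  shows "gcd ((2::int) ^ l - 2 ^ k) (2 ^ M - 1) = 2 ^ (nat (gcd (int l - int k) (int M))) - 1"
proof -
  have e: "(2::int) ^ l - 2 ^ k = 2 ^ k * (2 ^ (l - k) - 1)"
    using assms by (simp add: algebra_simps flip: power_add)
  have cop: "coprime ((2::int) ^ k) (2 ^ M - 1)"
  proof -
    have "odd ((2::int) ^ M - 1)" using M by simp
    then show ?thesis by (simp add: coprime_commute)
  qed
  have "gcd ((2::int) ^ l - 2 ^ k) (2 ^ M - 1) = gcd (2 ^ (l - k) - 1) (2 ^ M - 1)"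
    unfolding e using cop by (simp add: gcd_mult_left_left_cancel)
  also have "\<dots> = 2 ^ gcd (l - k) M - 1" by (rule gcd_two_pow_int)
  also have "gcd (l - k) M = nat (gcd (int l - int k) (int M))"
    using assms by (metis gcd_int_int_eq nat_int of_nat_diff)
  finally show ?thesis .
qed

lemma gcd_pow_diff:
  assumes M: "M > 0"
  shows "gcd ((2::int) ^ l - 2 ^ k) (2 ^ M - 1) = 2 ^ (nat (gcd (int l - int k) (int M))) - 1"
proof (cases "k \<le> l")
  case True then show ?thesis using M by (rule gcd_pow_diff_aux)
next
  case False
  then have "gcd ((2::int) ^ k - 2 ^ l) (2 ^ M - 1) = 2 ^ (nat (gcd (int k - int l) (int M))) - 1"
    using M by (intro gcd_pow_diff_aux) simp_all
  moreover have "gcd ((2::int) ^ l - 2 ^ k) (2 ^ M - 1) = gcd ((2::int) ^ k - 2 ^ l) (2 ^ M - 1)"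
    by (metis gcd_neg1_int minus_diff_eq)
  moreover have "gcd (int l - int k) (int M) = gcd (int k - int l) (int M)"
    by (metis gcd_neg1_int minus_diff_eq)
  ultimately show ?thesis by simp
qed

lemma lin_cong_solvable:
  fixes c A :: int and D :: nat
  assumes "D > 0"
  shows "(\<exists>x::nat. int D dvd c + int x * A) \<longleftrightarrow> gcd A (int D) dvd c"
proof
  assume "\<exists>x::nat. int D dvd c + int x * A"
  then obtain x :: nat where x: "int D dvd c + int x * A" by blast
  have "gcd A (int D) dvd c + int x * A" using x by (meson dvd_trans gcd_dvd2)
  moreover have "gcd A (int D) dvd int x * A" by simp
  ultimately show "gcd A (int D) dvd c" by (metis dvd_add_left_iff add.commute)
next
  assume "gcd A (int D) dvd c"
  then obtain t where t: "c = gcd A (int D) * t" by (auto elim: dvdE)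
  obtain u v where uv: "u * A + v * int D = gcd A (int D)" using bezout_int by blast
  define x where "x = nat ((- t * u) mod int D)"
  have x0: "int x = (- t * u) mod int D" unfolding x_def using assms by simp
  define r where "r = - ((- t * u) div int D)"
  have r: "(- t * u) mod int D = - t * u + int D * r"
    unfolding r_def using mod_div_mult_eq[of "- t * u" "int D"] by (simp add: algebra_simps)
  have "c + int x * A = int D * (t * v + r * A)"
  proof -
    have "c + int x * A = (u * A + v * int D) * t + (- t * u + int D * r) * A"
      by (simp only: t x0 r uv)
    also have "\<dots> = int D * (t * v + r * A)" by (simp add: algebra_simps)
    finally show ?thesis .
  qed
  then have "int D dvd c + int x * A" by (metis dvd_triv_left)
  then show "\<exists>x::nat. int D dvd c + int x * A" by blast
qed


lemma hpow_eq:
  fixes h :: "'a::field"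
  assumes h: "\<And>i. h ^ i = 1 \<longleftrightarrow> D dvd i" and D: "D > 0"
  shows "h ^ a = h ^ b \<longleftrightarrow> int D dvd int a - int b"
proof -
  have hnz: "h \<noteq> 0"
  proof
    assume "h = 0"
    then have "h ^ D = 0" using D by simp
    moreover have "h ^ D = 1" using h by simp
    ultimately show False by simp
  qed
  have *: "h ^ a = h ^ b \<longleftrightarrow> int D dvd int a - int b" if ab: "b \<le> a" for a b
  proof -
    have "h ^ a = h ^ b * h ^ (a - b)" using ab by (simp flip: power_add)
    then have "h ^ a = h ^ b \<longleftrightarrow> h ^ (a - b) = 1" using hnz by auto
    also have "\<dots> \<longleftrightarrow> D dvd (a - b)" by (rule h)
    also have "\<dots> \<longleftrightarrow> int D dvd int a - int b" using ab by (simp add: of_nat_diff flip: int_dvd_int_iff)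
    finally show ?thesis .
  qed
  show ?thesis
  proof (cases "b \<le> a")
    case True then show ?thesis by (rule *)
  next
    case False
    then have "h ^ b = h ^ a \<longleftrightarrow> int D dvd int b - int a" by (intro *) simp
    moreover have "int D dvd int b - int a \<longleftrightarrow> int D dvd int a - int b"
      by (metis dvd_minus_iff minus_diff_eq)
    ultimately show ?thesis by auto
  qed
qed

locale ff2 =
  fixes N :: nat and g :: "'a::{finite,field}"
  assumes card: "card (UNIV::'a set) = 2 ^ N"
    and gen: "\<And>x. x \<noteq> 0 \<Longrightarrow> \<exists>i. x = g ^ i"
    and ord: "\<And>i. g ^ i = 1 \<longleftrightarrow> (2 ^ N - 1) dvd i"
begin

lemma N_pos: "N > 0"
proof -
  have "card {0::'a, 1} = 2" by simp
  moreover have "card {0::'a, 1} \<le> card (UNIV::'a set)" by (rule card_mono) simp_all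
  ultimately have "2 \<le> (2::nat) ^ N" using card by simp
  then show ?thesis by (cases N) auto
qed

lemma D_pos: "(2::nat) ^ N - 1 > 0"
  using one_less_power[of "2::nat" N] N_pos by simp

lemma g_nz: "g \<noteq> 0"
proof
  assume g0: "g = 0"
  obtain j where j: "(2::nat) ^ N - 1 = Suc j" using D_pos gr0_conv_Suc by blast
  have "g ^ (2 ^ N - 1) = 0" unfolding j g0 by simp
  moreover have "g ^ (2 ^ N - 1) = 1" by (subst ord) simp
  ultimately show False by (metis zero_neq_one)
qed

lemma gpow_eq: "g ^ a = g ^ b \<longleftrightarrow> int (2 ^ N - 1) dvd int a - int b"
  by (rule hpow_eq[OF ord D_pos])

lemma char2: "(1::'a) + 1 = 0"
proof -
  have "(-1::'a) \<noteq> 0" by simp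
  then obtain i where i: "(-1::'a) = g ^ i" using gen by blast
  have "g ^ (i * 2) = 1" by (simp add: power_mult i[symmetric])
  then have "(2 ^ N - 1) dvd i * 2" using ord by blast
  moreover have "odd ((2::nat) ^ N - 1)" using N_pos by simp
  ultimately have "(2 ^ N - 1) dvd i"
    by (metis coprime_dvd_mult_left_iff coprime_left_2_iff_odd coprime_commute)
  then have "g ^ i = 1" using ord by blast
  then have "(-1::'a) = 1" using i by simp
  then show ?thesis by (metis add.right_inverse)
qed

lemma two_eq0[simp]: "(2::'a) = 0"
  by (metis char2 one_add_one)

lemma add_self[simp]: "(x::'a) + x = 0"
  by (metis mult_2 two_eq0 mult_zero_left)

lemma add_self2[simp]: "(x::'a) + (x + y) = y"
  by (simp add: add.assoc[symmetric])

lemma uminus_self[simp]: "- (x::'a) = x"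
  by (metis add_self add.inverse_unique)

lemma diff_is_add[simp]: "(x::'a) - y = x + y"
  by (metis uminus_self diff_conv_add_uminus)

lemma add_eq0_iff: "(x::'a) + y = 0 \<longleftrightarrow> x = y"
  by (metis add_self add.left_cancel)

lemma add_eq_iff: "(x::'a) + y = z \<longleftrightarrow> x = z + y"
  by (metis add.assoc add_self add_0_right)

lemma sq_add: "((x::'a) + y) ^ 2 = x ^ 2 + y ^ 2"
proof -
  have "(x + y) ^ 2 = x ^ 2 + y ^ 2 + (x * y + x * y)" by (simp add: power2_eq_square algebra_simps)
  then show ?thesis by simp
qed

lemma frob: "((x::'a) + y) ^ (2 ^ k) = x ^ (2 ^ k) + y ^ (2 ^ k)"
proof (induction k)
  case (Suc k)
  have "(x + y) ^ (2 ^ Suc k) = ((x + y) ^ (2 ^ k)) ^ 2" by (simp add: power_mult[symmetric] mult.commute)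
  also have "\<dots> = (x ^ (2 ^ k)) ^ 2 + (y ^ (2 ^ k)) ^ 2" by (simp add: Suc sq_add)
  also have "\<dots> = x ^ (2 ^ Suc k) + y ^ (2 ^ Suc k)" by (simp add: power_mult[symmetric] mult.commute)
  finally show ?case .
qed simp

lemma frob_sum: "(\<Sum>i\<in>A. f i :: 'a) ^ (2 ^ k) = (\<Sum>i\<in>A. f i ^ (2 ^ k))"
proof (induction A rule: infinite_finite_induct)
  case (insert x F) then show ?case by (simp add: frob)
qed simp_all

lemma pow2_inj: "(x::'a) ^ (2 ^ k) = y ^ (2 ^ k) \<Longrightarrow> x = y"
proof -
  assume "x ^ (2 ^ k) = y ^ (2 ^ k)"
  then have "(x + y) ^ (2 ^ k) = 0" by (simp add: frob)
  then have "x + y = 0" by simp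
  then show "x = y" by (simp add: add_eq0_iff)
qed

lemma pow2_inj_iff: "(x::'a) ^ (2 ^ k) = y ^ (2 ^ k) \<longleftrightarrow> x = y"
  using pow2_inj by blast

lemma fermat: "(x::'a) ^ (2 ^ N) = x"
proof (cases "x = 0")
  case True then show ?thesis by simp
next
  case False
  then obtain i where i: "x = g ^ i" using gen by blast
  have "x ^ (2 ^ N - 1) = 1" unfolding i by (simp add: power_mult[symmetric] ord mult.commute)
  then have "x ^ (2 ^ N - 1) * x = x" by simp
  moreover have "2 ^ N - 1 + 1 = (2::nat) ^ N" by simp
  ultimately show ?thesis by (metis power_add power_one_right)
qed

lemma fermat_mult: "(x::'a) ^ (2 ^ (N * c)) = x"
proof (induction c)
  case (Suc c)
  have "x ^ (2 ^ (N * Suc c)) = (x ^ (2 ^ N)) ^ (2 ^ (N * c))"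
    by (simp add: power_add power_mult[symmetric])
  then show ?case by (simp add: fermat Suc)
qed simp

lemma pow2_mod: "(x::'a) ^ (2 ^ i) = x ^ (2 ^ (i mod N))"
proof -
  have "(x::'a) ^ (2 ^ i) = (x ^ (2 ^ (i mod N))) ^ (2 ^ (N * (i div N)))"
    using power_add[of "2::nat" "i mod N" "N * (i div N)"]
    by (simp only: mod_mult_div_eq power_mult)
  then show ?thesis by (simp add: fermat_mult)
qed

lemma root2: "\<exists>y::'a. y ^ (2 ^ k) = x"
proof -
  have "N * k \<ge> k" using N_pos by simp
  then have "(x ^ (2 ^ (N * k - k))) ^ (2 ^ k) = x ^ (2 ^ (N * k))"
    by (simp add: power_mult[symmetric] power_add[symmetric])
  then show ?thesis by (auto simp: fermat_mult)
qed

lemma pow2_nz: "(x::'a) ^ (2 ^ k) = 0 \<longleftrightarrow> x = 0"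
  by simp

end


lemma KL:
  fixes h a b :: "'a::field"
  assumes h: "\<And>i. h ^ i = 1 \<longleftrightarrow> (2 ^ M - 1) dvd i" and M: "M > 0"
    and a: "a = 0 \<or> (\<exists>i. a = h ^ i)" and b: "b = 0 \<or> (\<exists>i. b = h ^ i)"
    and e: "e = nat (gcd (int l - int k) (int M))"
  shows "(\<exists>u. u \<noteq> 0 \<and> (\<exists>x. u = h ^ x) \<and> a * u ^ (2 ^ k) = b * u ^ (2 ^ l))
         \<longleftrightarrow> a ^ ((2 ^ M - 1) div (2 ^ e - 1)) = b ^ ((2 ^ M - 1) div (2 ^ e - 1))"
proof -
  define D :: nat where "D = 2 ^ M - 1"
  define G :: nat where "G = 2 ^ e - 1"
  define E where "E = D div G"
  have Dpos: "D > 0" unfolding D_def using one_less_power[of "2::nat" M] M by simp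
  have h': "\<And>i. h ^ i = 1 \<longleftrightarrow> D dvd i" using h unfolding D_def .
  have hnz: "h \<noteq> 0"
  proof
    assume h0: "h = 0"
    obtain j where j: "D = Suc j" using Dpos gr0_conv_Suc by blast
    have "h ^ D = 0" unfolding j h0 by simp
    moreover have "h ^ D = 1" by (subst h') simp
    ultimately show False by (metis zero_neq_one)
  qed
  have epos: "e > 0" unfolding e using M by simp
  have edvd: "e dvd M"
  proof -
    have "gcd (int l - int k) (int M) dvd int M" by simp
    then have "int e dvd int M" unfolding e by simp
    then show ?thesis by simp
  qed
  have GD: "int G dvd int D"
  proof -
    obtain c where c: "M = e * c" using edvd by blast
    have "(2::int) ^ e - 1 dvd 2 ^ (e * c) - 1" by (rule two_pow_dvd_int)
    then show ?thesis unfolding G_def D_def c by (simp add: of_nat_diff)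
  qed
  have Gpos: "G > 0" unfolding G_def using one_less_power[of "2::nat" e] epos by simp
  have DGE: "int D = int G * int E"
    using GD unfolding E_def by (metis dvd_mult_div_cancel int_dvd_int_iff of_nat_mult)
  have Epos: "E > 0" using DGE Dpos Gpos by (metis gr0I mult_zero_right of_nat_0 of_nat_eq_0_iff)
  have gcdA: "gcd ((2::int) ^ l - 2 ^ k) (int D) = int G"
    unfolding D_def G_def e using gcd_pow_diff[OF M, of l k] by (simp add: of_nat_diff)
  have Eeq: "(2 ^ M - 1) div (2 ^ e - 1) = E" unfolding E_def D_def G_def ..
  have "(\<exists>u. u \<noteq> 0 \<and> (\<exists>x. u = h ^ x) \<and> a * u ^ (2 ^ k) = b * u ^ (2 ^ l))
         \<longleftrightarrow> a ^ E = b ^ E"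
  proof (cases "a = 0 \<or> b = 0")
    case True
    have "(\<exists>u. u \<noteq> 0 \<and> (\<exists>x. u = h ^ x) \<and> a * u ^ (2 ^ k) = b * u ^ (2 ^ l)) \<longleftrightarrow> a = 0 \<and> b = 0"
    proof
      assume "\<exists>u. u \<noteq> 0 \<and> (\<exists>x. u = h ^ x) \<and> a * u ^ (2 ^ k) = b * u ^ (2 ^ l)"
      then obtain u where "u \<noteq> 0" "a * u ^ (2 ^ k) = b * u ^ (2 ^ l)" by blast
      then show "a = 0 \<and> b = 0" using True by auto
    next
      assume "a = 0 \<and> b = 0"
      then show "\<exists>u. u \<noteq> 0 \<and> (\<exists>x. u = h ^ x) \<and> a * u ^ (2 ^ k) = b * u ^ (2 ^ l)"
        by (intro exI[of _ 1]) (auto intro: exI[of _ 0])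
    qed
    moreover have "a ^ E = b ^ E \<longleftrightarrow> a = 0 \<and> b = 0" using True Epos
      by (auto simp: zero_power power_0_left)
    ultimately show ?thesis by simp
  next
    case False
    then obtain i j where i: "a = h ^ i" and j: "b = h ^ j" using a b by blast
    have "(\<exists>u. u \<noteq> 0 \<and> (\<exists>x. u = h ^ x) \<and> a * u ^ (2 ^ k) = b * u ^ (2 ^ l))
          \<longleftrightarrow> (\<exists>x. h ^ (i + x * 2 ^ k) = h ^ (j + x * 2 ^ l))"
    proof
      assume "\<exists>u. u \<noteq> 0 \<and> (\<exists>x. u = h ^ x) \<and> a * u ^ (2 ^ k) = b * u ^ (2 ^ l)"
      then obtain x where "a * (h ^ x) ^ (2 ^ k) = b * (h ^ x) ^ (2 ^ l)" by blast
      then show "\<exists>x. h ^ (i + x * 2 ^ k) = h ^ (j + x * 2 ^ l)"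
        unfolding i j by (auto simp: power_add power_mult)
    next
      assume "\<exists>x. h ^ (i + x * 2 ^ k) = h ^ (j + x * 2 ^ l)"
      then obtain x where "h ^ (i + x * 2 ^ k) = h ^ (j + x * 2 ^ l)" by blast
      then show "\<exists>u. u \<noteq> 0 \<and> (\<exists>x. u = h ^ x) \<and> a * u ^ (2 ^ k) = b * u ^ (2 ^ l)"
        unfolding i j using hnz by (intro exI[of _ "h ^ x"]) (auto simp: power_add power_mult)
    qed
    also have "\<dots> \<longleftrightarrow> (\<exists>x::nat. int D dvd (int j - int i) + int x * ((2::int) ^ l - 2 ^ k))"
    proof -
      have "h ^ (i + x * 2 ^ k) = h ^ (j + x * 2 ^ l) \<longleftrightarrow> int D dvd (int j - int i) + int x * ((2::int) ^ l - 2 ^ k)" for x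
      proof -
        have "h ^ (i + x * 2 ^ k) = h ^ (j + x * 2 ^ l) \<longleftrightarrow> int D dvd int (i + x * 2 ^ k) - int (j + x * 2 ^ l)"
          by (rule hpow_eq[OF h' Dpos])
        also have "int (i + x * 2 ^ k) - int (j + x * 2 ^ l) = - ((int j - int i) + int x * ((2::int) ^ l - 2 ^ k))"
          by (simp add: algebra_simps)
        finally show ?thesis by (simp only: dvd_minus_iff)
      qed
      then show ?thesis by simp
    qed
    also have "\<dots> \<longleftrightarrow> int G dvd (int j - int i)"
      using lin_cong_solvable[OF Dpos, of "int j - int i" "(2::int) ^ l - 2 ^ k"] gcdA by simp
    also have "\<dots> \<longleftrightarrow> int D dvd int (i * E) - int (j * E)"
    proof -
      have "int (i * E) - int (j * E) = (int i - int j) * int E" by (simp add: algebra_simps)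
      then have "int D dvd int (i * E) - int (j * E) \<longleftrightarrow> int G * int E dvd (int i - int j) * int E"
        using DGE by simp
      also have "\<dots> \<longleftrightarrow> int G dvd (int i - int j)" using Epos by simp
      also have "\<dots> \<longleftrightarrow> int G dvd (int j - int i)" by (metis dvd_minus_iff minus_diff_eq)
      finally show ?thesis by simp
    qed
    also have "\<dots> \<longleftrightarrow> h ^ (i * E) = h ^ (j * E)" by (rule hpow_eq[OF h' Dpos, symmetric])
    also have "\<dots> \<longleftrightarrow> a ^ E = b ^ E" unfolding i j by (simp add: power_mult)
    finally show ?thesis .
  qed
  then show ?thesis unfolding Eeq .
qed


context ff2
begin

lemma rank_nullity:
  fixes \<phi> :: "'a \<Rightarrow> 'a"
  assumes add: "\<And>x y. \<phi> (x + y) = \<phi> x + \<phi> y"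
  shows "card (UNIV::'a set) = card (range \<phi>) * card {x. \<phi> x = 0}"
proof -
  have fib: "card (\<phi> -` {y}) = card {x. \<phi> x = 0}" if yr: "y \<in> range \<phi>" for y
  proof -
    obtain x0 where x0: "y = \<phi> x0" using yr by blast
    have "\<phi> -` {y} = (\<lambda>z. x0 + z) ` {x. \<phi> x = 0}"
    proof (rule Set.set_eqI, rule iffI)
      fix x assume "x \<in> \<phi> -` {y}"
      then have "\<phi> (x0 + x) = 0" using x0 add by simp
      moreover have "x = x0 + (x0 + x)" by (simp flip: add.assoc)
      ultimately show "x \<in> (\<lambda>z. x0 + z) ` {x. \<phi> x = 0}" by blast
    next
      fix x assume "x \<in> (\<lambda>z. x0 + z) ` {x. \<phi> x = 0}"
      then obtain z where "\<phi> z = 0" "x = x0 + z" by blast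
      then show "x \<in> \<phi> -` {y}" using x0 add by simp
    qed
    moreover have "inj (\<lambda>z. x0 + z)" by (simp add: inj_def)
    ultimately show ?thesis by (simp add: card_image inj_on_def)
  qed
  have "UNIV = (\<Union>y\<in>range \<phi>. \<phi> -` {y})" by blast
  then have "card (UNIV::'a set) = card (\<Union>y\<in>range \<phi>. \<phi> -` {y})" by simp
  also have "\<dots> = (\<Sum>y\<in>range \<phi>. card (\<phi> -` {y}))"
    by (rule card_UN_disjoint) auto
  also have "\<dots> = (\<Sum>y\<in>range \<phi>. card {x. \<phi> x = 0})" using fib by simp
  also have "\<dots> = card (range \<phi>) * card {x. \<phi> x = 0}" by simp
  finally show ?thesis .
qed

end

locale ffq = ff2 N g for N :: nat and g :: "'a::{finite,field}" +
  fixes m n :: nat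
  assumes m_pos: "m \<ge> 1" and Nmn: "N = m * n" and n_odd: "odd n"
begin

abbreviation "F \<equiv> (subF (2 ^ m) :: 'a set)"
abbreviation "T \<equiv> (Tr (2 ^ m) n :: 'a \<Rightarrow> 'a)"

lemma n_pos: "n > 0" using n_odd by (cases n) auto

lemma qn: "((2::nat) ^ m) ^ n = 2 ^ N" by (simp add: Nmn power_mult)

lemma inF: "x \<in> F \<longleftrightarrow> x ^ (2 ^ m) = x" by (simp add: subF_def)

lemma frobq: "((x::'a) + y) ^ ((2 ^ m) ^ i) = x ^ ((2 ^ m) ^ i) + y ^ ((2 ^ m) ^ i)"
  by (simp add: frob flip: power_mult)

lemma F_powq: "x \<in> F \<Longrightarrow> x ^ ((2 ^ m) ^ j) = x"
proof (induction j)
  case (Suc j)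
  have "x ^ ((2 ^ m) ^ Suc j) = (x ^ ((2 ^ m) ^ j)) ^ (2 ^ m)" by (simp only: power_Suc2 power_mult)
  then show ?case using Suc by (simp add: inF)
qed simp

lemma powqn: "(x::'a) ^ ((2 ^ m) ^ n) = x" by (simp add: qn fermat)

lemma powq_mod: "(x::'a) ^ ((2 ^ m) ^ j) = x ^ ((2 ^ m) ^ (j mod n))"
proof -
  have "x ^ ((2 ^ m) ^ j) = (x ^ ((2 ^ m) ^ (j mod n))) ^ (((2 ^ m) ^ n) ^ (j div n))"
    using power_add[of "(2::nat) ^ m" "j mod n" "n * (j div n)"]
    by (simp only: mod_mult_div_eq power_mult)
  also have "\<dots> = x ^ ((2 ^ m) ^ (j mod n))"
  proof -
    have B: "(((2::nat) ^ m) ^ n) ^ (j div n) = 2 ^ (N * (j div n))" by (simp add: qn power_mult)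
    show ?thesis by (simp only: B fermat_mult)
  qed
  finally show ?thesis .
qed

lemma pow_comm: "((x::'a) ^ a) ^ b = (x ^ b) ^ a"
  by (simp add: power_mult[symmetric] mult.commute)

lemma F_0[simp]: "0 \<in> F" using m_pos by (simp add: inF)
lemma F_1[simp]: "1 \<in> F" by (simp add: inF)
lemma F_add: "x \<in> F \<Longrightarrow> y \<in> F \<Longrightarrow> x + y \<in> F"
  by (simp add: inF frob)
lemma F_mult: "x \<in> F \<Longrightarrow> y \<in> F \<Longrightarrow> x * y \<in> F"
  by (simp add: inF power_mult_distrib)
lemma F_inverse: "x \<in> F \<Longrightarrow> inverse x \<in> F"
  by (simp add: inF power_inverse)
lemma F_divide: "x \<in> F \<Longrightarrow> y \<in> F \<Longrightarrow> x / y \<in> F"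
  by (simp add: divide_inverse F_mult F_inverse)
lemma F_power: "x \<in> F \<Longrightarrow> x ^ j \<in> F"
  by (simp add: inF pow_comm[of x j "2 ^ m"])

lemma F_pow2_mod: "x \<in> F \<Longrightarrow> x ^ (2 ^ i) = x ^ (2 ^ (i mod m))"
proof -
  assume x: "x \<in> F"
  have "x ^ (2 ^ i) = (x ^ (2 ^ (i mod m))) ^ ((2 ^ m) ^ (i div m))"
    using power_add[of "2::nat" "i mod m" "m * (i div m)"]
    by (simp only: mod_mult_div_eq power_mult)
  also have "\<dots> = x ^ (2 ^ (i mod m))"
  proof -
    have "x ^ (2 ^ (i mod m)) \<in> F" using x by (rule F_power)
    then show ?thesis by (rule F_powq)
  qed
  finally show ?thesis .
qed

lemma Fdvd: "int (2 ^ m - 1) dvd int (2 ^ N - 1)"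
  using two_pow_dvd_int[of m n] by (simp add: Nmn of_nat_diff)

definition Rq :: nat where "Rq = (2 ^ N - 1) div (2 ^ m - 1)"
definition "hF = g ^ Rq"

lemma Rq_eq: "((2::nat) ^ N - 1) = Rq * (2 ^ m - 1)"
  using Fdvd unfolding Rq_def by (metis dvd_div_mult_self int_dvd_int_iff)

lemma Rq_pos: "Rq > 0" using Rq_eq D_pos by (cases Rq) auto

lemma qm1_pos: "(2::nat) ^ m - 1 > 0" using one_less_power[of "2::nat" m] m_pos by simp

lemma hF_ord: "hF ^ i = 1 \<longleftrightarrow> (2 ^ m - 1) dvd i"
proof -
  have "hF ^ i = 1 \<longleftrightarrow> (2 ^ N - 1) dvd Rq * i" unfolding hF_def by (simp add: ord flip: power_mult)
  also have "\<dots> \<longleftrightarrow> (2 ^ m - 1) dvd i" unfolding Rq_eq using Rq_pos by (simp add: mult.commute)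
  finally show ?thesis .
qed

lemma F_char: "x \<in> F \<longleftrightarrow> x = 0 \<or> (\<exists>i. x = hF ^ i)"
proof
  assume x: "x \<in> F"
  show "x = 0 \<or> (\<exists>i. x = hF ^ i)"
  proof (cases "x = 0")
    case False
    then obtain j where j: "x = g ^ j" using gen by blast
    have "g ^ (j * 2 ^ m) = g ^ (j * 1)" using x j by (simp add: inF power_mult)
    then have "int (2 ^ N - 1) dvd int (j * 2 ^ m) - int (j * 1)" using gpow_eq by blast
    also have "int (j * 2 ^ m) - int (j * 1) = int (j * (2 ^ m - 1))"
      using qm1_pos by (simp add: of_nat_diff algebra_simps)
    finally have "(2 ^ N - 1) dvd j * (2 ^ m - 1)" by (simp only: int_dvd_int_iff)
    then have "Rq dvd j" unfolding Rq_eq using qm1_pos by simp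
    then obtain i where "j = Rq * i" by blast
    then have "x = hF ^ i" unfolding j hF_def by (simp add: power_mult)
    then show ?thesis by blast
  qed simp
next
  assume "x = 0 \<or> (\<exists>i. x = hF ^ i)"
  then show "x \<in> F"
  proof
    assume "\<exists>i. x = hF ^ i"
    then obtain i where i: "x = hF ^ i" by blast
    have "hF ^ (i * 2 ^ m) = hF ^ i"
    proof (subst hpow_eq[OF hF_ord qm1_pos])
      have "int (i * 2 ^ m) - int i = int (2 ^ m - 1) * int i"
        using qm1_pos by (simp add: of_nat_diff algebra_simps)
      then show "int (2 ^ m - 1) dvd int (i * 2 ^ m) - int i" by simp
    qed
    then show "x \<in> F" unfolding i by (simp add: inF flip: power_mult)
  qed simp
qed

lemma card_F: "card F = 2 ^ m"
proof -
  have eq: "F = insert 0 ((\<lambda>i. hF ^ i) ` {..<2 ^ m - 1})"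
  proof (rule Set.set_eqI, rule iffI)
    fix x assume "x \<in> F"
    then have "x = 0 \<or> (\<exists>i. x = hF ^ i)" by (simp add: F_char)
    then show "x \<in> insert 0 ((\<lambda>i. hF ^ i) ` {..<2 ^ m - 1})"
    proof
      assume "\<exists>i. x = hF ^ i"
      then obtain i where i: "x = hF ^ i" by blast
      have "int i - int (i mod (2 ^ m - 1)) = int (2 ^ m - 1) * (int i div int (2 ^ m - 1))"
        by (simp only: of_nat_mod minus_mod_eq_mult_div)
      then have "hF ^ i = hF ^ (i mod (2 ^ m - 1))"
        by (subst hpow_eq[OF hF_ord qm1_pos]) simp
      moreover have "i mod (2 ^ m - 1) < 2 ^ m - 1" using qm1_pos by simp
      ultimately show ?thesis unfolding i by blast
    qed simp
  next
    fix x assume "x \<in> insert 0 ((\<lambda>i. hF ^ i) ` {..<2 ^ m - 1})"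
    then show "x \<in> F" by (auto simp: F_char)
  qed
  have inj: "inj_on (\<lambda>i. hF ^ i) {..<2 ^ m - 1}"
  proof (rule inj_onI)
    fix i j assume ij: "i \<in> {..<2 ^ m - 1}" "j \<in> {..<2 ^ m - 1}" "hF ^ i = hF ^ j"
    then have "int (2 ^ m - 1) dvd int i - int j" using hpow_eq[OF hF_ord qm1_pos] by blast
    moreover have "\<bar>int i - int j\<bar> < int (2 ^ m - 1)"
    proof -
      have "i < 2 ^ m - 1" "j < 2 ^ m - 1" using ij by auto
      then have "int i < int (2 ^ m - 1)" "int j < int (2 ^ m - 1)" by (simp_all only: of_nat_less_iff)
      then show ?thesis by linarith
    qed
    ultimately show "i = j"
    proof (cases "i = j")
      case False
      then have "int i - int j \<noteq> 0" by simp
      then have "\<bar>int (2 ^ m - 1)\<bar> \<le> \<bar>int i - int j\<bar>"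
        using dvd_imp_le_int \<open>int (2 ^ m - 1) dvd int i - int j\<close> by blast
      then show ?thesis using \<open>\<bar>int i - int j\<bar> < int (2 ^ m - 1)\<close> by simp
    qed
  qed
  have "0 \<notin> (\<lambda>i. hF ^ i) ` {..<2 ^ m - 1}"
    using hF_def g_nz by auto
  then have "card F = Suc (card ((\<lambda>i. hF ^ i) ` {..<2 ^ m - 1}))" unfolding eq by simp
  also have "\<dots> = Suc (2 ^ m - 1)" using inj by (simp add: card_image)
  also have "\<dots> = 2 ^ m" using qm1_pos by simp
  finally show ?thesis .
qed

end


context ffq
begin

lemma Tr_def': "T y = (\<Sum>i<n. y ^ ((2 ^ m) ^ i))" by (simp add: Tr_def)

lemma Tr_add: "T (x + y) = T x + T y"
  by (simp add: Tr_def frobq sum.distrib)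

lemma Tr_0[simp]: "T 0 = 0"
  using Tr_add[of 0 0] by simp

lemma Tr_smult: "c \<in> F \<Longrightarrow> T (c * y) = c * T y"
  by (simp add: Tr_def power_mult_distrib F_powq sum_distrib_left)

lemma Tr_frob: "(T y) ^ (2 ^ m) = T (y ^ (2 ^ m))"
  unfolding Tr_def by (simp add: frob_sum pow_comm[of y _ "2 ^ m"])

lemma Tr_powq: "T (y ^ (2 ^ m)) = T y"
proof -
  define f where "f i = y ^ ((2 ^ m) ^ i)" for i
  have "T (y ^ (2 ^ m)) = (\<Sum>i<n. f (Suc i))"
    unfolding Tr_def f_def by (simp add: power_mult[symmetric] mult.commute)
  moreover have "(\<Sum>i<Suc n. f i) = f 0 + (\<Sum>i<n. f (Suc i))" by (rule sum.lessThan_Suc_shift)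
  moreover have "(\<Sum>i<Suc n. f i) = (\<Sum>i<n. f i) + f n" by (rule sum.lessThan_Suc)
  moreover have "f n = f 0" unfolding f_def using powqn by simp
  ultimately have "T (y ^ (2 ^ m)) = (\<Sum>i<n. f i)" by (metis add.commute add_left_cancel)
  then show ?thesis unfolding Tr_def f_def by simp
qed

lemma Tr_powq_iter: "T (y ^ ((2 ^ m) ^ t)) = T y"
proof (induction t)
  case (Suc t)
  have "y ^ ((2 ^ m) ^ Suc t) = (y ^ ((2 ^ m) ^ t)) ^ (2 ^ m)" by (simp only: power_Suc2 power_mult)
  then show ?case using Suc by (simp add: Tr_powq)
qed simp

lemma Tr_inF: "T y \<in> F"
  by (simp add: inF Tr_frob Tr_powq)

lemma of_nat_odd: "odd j \<Longrightarrow> (of_nat j :: 'a) = 1"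
proof -
  assume "odd j"
  then obtain i where "j = Suc (2 * i)" by (metis oddE Suc_eq_plus1)
  then show ?thesis by simp
qed

lemma Tr_F: "c \<in> F \<Longrightarrow> T c = c"
  by (simp add: Tr_def F_powq of_nat_odd[OF n_odd])

lemma Tr_nz: "\<exists>y. T y \<noteq> 0"
proof (rule ccontr)
  assume "\<not> (\<exists>y. T y \<noteq> 0)"
  then have all0: "\<And>y. T y = 0" by blast
  define P :: "'a poly" where "P = (\<Sum>i<n. Polynomial.monom 1 ((2 ^ m) ^ i))"
  have polyP: "poly P y = T y" for y
    unfolding P_def Tr_def by (simp add: poly_sum poly_monom)
  have q1: "(2::nat) ^ m > 1" using m_pos one_less_power[of "2::nat" m] by simp
  have "Polynomial.coeff P 1 = (\<Sum>i<n. if i = 0 then 1 else 0)"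
    unfolding P_def coeff_sum
  proof (rule sum.cong)
    fix i assume "i \<in> {..<n}"
    have "((2::nat) ^ m) ^ i = 1 \<longleftrightarrow> i = 0" using q1 by (auto simp: power_eq_1_iff)
    then show "Polynomial.coeff (Polynomial.monom 1 ((2 ^ m) ^ i)) 1 = (if i = 0 then 1 else 0)"
      by (auto simp: coeff_monom)
  qed simp
  also have "\<dots> = 1" using n_pos by (simp add: sum.delta')
  finally have "P \<noteq> 0" by auto
  have degP: "Polynomial.degree P \<le> (2 ^ m) ^ (n - 1)"
    unfolding P_def
  proof (rule degree_sum_le)
    fix i assume "i \<in> {..<n}"
    then have "((2::nat) ^ m) ^ i \<le> (2 ^ m) ^ (n - 1)" using q1 by (intro power_increasing) auto
    then show "Polynomial.degree (Polynomial.monom (1::'a) ((2 ^ m) ^ i)) \<le> (2 ^ m) ^ (n - 1)"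
      using degree_monom_le order_trans by blast
  qed simp
  have "card {x. poly P x = 0} \<le> Polynomial.degree P" using \<open>P \<noteq> 0\<close> by (rule card_poly_roots_bound)
  moreover have "{x. poly P x = 0} = UNIV" using polyP all0 by auto
  moreover have "((2::nat) ^ m) ^ (n - 1) < (2 ^ m) ^ n" using q1 n_pos by (intro power_strict_increasing) auto
  ultimately have "card (UNIV::'a set) < (2 ^ m) ^ n" using degP by simp
  then show False using card qn by simp
qed

lemma Tr_surj: "c \<in> F \<Longrightarrow> \<exists>y. T y = c"
proof -
  assume c: "c \<in> F"
  obtain y0 where y0: "T y0 \<noteq> 0" using Tr_nz by blast
  have "c / T y0 \<in> F" using c Tr_inF by (rule F_divide)
  then have "T ((c / T y0) * y0) = (c / T y0) * T y0" by (rule Tr_smult)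
  also have "\<dots> = c" using y0 by simp
  finally show ?thesis by blast
qed

definition "wq u = u ^ ((2 ^ m) ^ (n - 1)) + u ^ (2 ^ m)"

lemma n_decomp: obtains j where "n = Suc (2 * j)"
  using n_odd by (metis oddE Suc_eq_plus1)

lemma qq_pow: "(((2::nat) ^ m) ^ (2 * j)) = (2 ^ m * 2 ^ m) ^ j"
  by (simp only: power_mult power2_eq_square)

lemma wq_zero: "wq u = 0 \<longleftrightarrow> u \<in> F"
proof
  assume "wq u = 0"
  then have e: "u ^ ((2 ^ m) ^ (n - 1)) = u ^ (2 ^ m)" by (simp add: wq_def add_eq0_iff)
  obtain j where nj: "n = Suc (2 * j)" by (rule n_decomp)
  have nm1: "n - 1 = 2 * j" using nj by simp
  have e2: "u ^ ((2 ^ m * 2 ^ m) ^ j) = u ^ (2 ^ m)" using e unfolding nm1 qq_pow .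
  have "u = u ^ ((2 ^ m) ^ n)" using powqn by simp
  also have "\<dots> = (u ^ ((2 ^ m * 2 ^ m) ^ j)) ^ (2 ^ m)" unfolding nj qq_pow[symmetric]
    by (simp only: power_Suc2 power_mult)
  also have "\<dots> = u ^ (2 ^ m * 2 ^ m)" unfolding e2 by (simp only: power_mult)
  finally have u2: "u ^ (2 ^ m * 2 ^ m) = u" by simp
  have u2j: "u ^ ((2 ^ m * 2 ^ m) ^ i) = u" for i
  proof (induction i)
    case (Suc i)
    have "u ^ ((2 ^ m * 2 ^ m) ^ Suc i) = (u ^ ((2 ^ m * 2 ^ m) ^ i)) ^ (2 ^ m * 2 ^ m)"
      by (simp only: power_Suc2 power_mult)
    then show ?case using Suc u2 by simp
  qed simp
  have "u ^ (2 ^ m) = u" using e2 u2j by simp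
  then show "u \<in> F" by (simp add: inF)
next
  assume "u \<in> F"
  then show "wq u = 0" by (simp add: wq_def F_powq inF)
qed

lemma ring_expand4: "((X::'a) + U) * (x + u) = X * x + U * u + (X * u + x * U)"
  by (simp add: algebra_simps)

lemma Q_expand:
  "T ((x + u) ^ (2 ^ m + 1)) = T (x ^ (2 ^ m + 1)) + T (u ^ (2 ^ m + 1)) + T (x * wq u)"
proof -
  have "(x + u) ^ (2 ^ m + 1) = (x ^ (2 ^ m) + u ^ (2 ^ m)) * (x + u)"
    by (simp only: power_add power_one_right frob)
  also have "\<dots> = x ^ (2 ^ m) * x + u ^ (2 ^ m) * u + (x ^ (2 ^ m) * u + x * u ^ (2 ^ m))"
    by (rule ring_expand4)
  also have "x ^ (2 ^ m) * x = x ^ (2 ^ m + 1)" by (simp only: power_add power_one_right)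
  also have "u ^ (2 ^ m) * u = u ^ (2 ^ m + 1)" by (simp only: power_add power_one_right)
  finally have e1: "(x + u) ^ (2 ^ m + 1) = x ^ (2 ^ m + 1) + u ^ (2 ^ m + 1) + (x ^ (2 ^ m) * u + x * u ^ (2 ^ m))" .
  obtain j where nj: "n = Suc (2 * j)" by (rule n_decomp)
  have nm1: "n - 1 = 2 * j" using nj by simp
  have "(u ^ ((2 ^ m) ^ (2 * j))) ^ (2 ^ m) = u ^ ((2 ^ m) ^ n)"
    by (simp only: nj power_Suc2 power_mult)
  then have v: "(u ^ ((2 ^ m) ^ (n - 1))) ^ (2 ^ m) = u" unfolding nm1 using powqn by simp
  have "(x * u ^ ((2 ^ m) ^ (n - 1))) ^ (2 ^ m) = x ^ (2 ^ m) * u"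
    by (simp only: power_mult_distrib v)
  then have "T (x ^ (2 ^ m) * u) = T ((x * u ^ ((2 ^ m) ^ (n - 1))) ^ (2 ^ m))" by simp
  also have "\<dots> = T (x * u ^ ((2 ^ m) ^ (n - 1)))" by (rule Tr_powq)
  finally have t1: "T (x ^ (2 ^ m) * u) = T (x * u ^ ((2 ^ m) ^ (n - 1)))" .
  have "T (x ^ (2 ^ m) * u) + T (x * u ^ (2 ^ m)) = T (x * u ^ ((2 ^ m) ^ (n - 1))) + T (x * u ^ (2 ^ m))"
    by (simp only: t1)
  also have "\<dots> = T (x * wq u)" by (simp only: wq_def distrib_left Tr_add)
  finally have t2: "T (x ^ (2 ^ m) * u) + T (x * u ^ (2 ^ m)) = T (x * wq u)" .
  show ?thesis unfolding e1 by (simp only: Tr_add t2)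
qed

lemma MC:
  fixes L :: "'a \<Rightarrow> 'a"
  assumes Ladd: "\<And>x y. L (x + y) = L x + L y"
  shows "bij (\<lambda>x. T (x ^ (2 ^ m + 1)) + L x) \<longleftrightarrow>
    (\<forall>u. u \<notin> F \<longrightarrow> L u \<notin> F) \<and> (\<forall>u. u \<in> F \<longrightarrow> u \<noteq> 0 \<longrightarrow> L u \<noteq> u ^ 2)"
proof -
  define f where "f x = T (x ^ (2 ^ m + 1)) + L x" for x
  have diff: "f (x + u) + f x = T (u ^ (2 ^ m + 1)) + L u + T (x * wq u)" for x u
    unfolding f_def Q_expand Ladd by (simp add: add.assoc add.commute add.left_commute add_self2)
  have Qf: "T (u ^ (2 ^ m + 1)) = u ^ 2" if "u \<in> F" for u
  proof -
    have "u ^ (2 ^ m + 1) = u ^ 2" using that by (simp add: inF power2_eq_square)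
    moreover have "u ^ 2 \<in> F" using that by (rule F_power)
    ultimately show ?thesis by (simp add: Tr_F)
  qed
  have "bij f \<longleftrightarrow> inj f" using finite_UNIV_inj_surj[of f] by (auto simp: bij_def)
  also have "inj f \<longleftrightarrow> (\<forall>x u. u \<noteq> 0 \<longrightarrow> f (x + u) \<noteq> f x)"
  proof
    assume "inj f"
    show "\<forall>x u. u \<noteq> 0 \<longrightarrow> f (x + u) \<noteq> f x"
    proof (intro allI impI notI)
      fix x u assume "u \<noteq> 0" and fe: "f (x + u) = f x"
      have "x + u = x" using injD[OF \<open>inj f\<close> fe] .
      then show False using \<open>u \<noteq> 0\<close> by simp
    qed
  next
    assume H: "\<forall>x u. u \<noteq> 0 \<longrightarrow> f (x + u) \<noteq> f x"
    show "inj f"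
    proof (rule injI)
      fix a b assume ab: "f a = f b"
      have e: "b + (a + b) = a" by (simp add: add.left_commute add_self2)
      show "a = b"
      proof (rule ccontr)
        assume "a \<noteq> b"
        then have "a + b \<noteq> 0" by (simp add: add_eq0_iff)
        then have "f (b + (a + b)) \<noteq> f b" using H by blast
        then show False using ab e by simp
      qed
    qed
  qed
  also have "(\<forall>x u. u \<noteq> 0 \<longrightarrow> f (x + u) \<noteq> f x) \<longleftrightarrow>
    (\<forall>u. u \<notin> F \<longrightarrow> L u \<notin> F) \<and> (\<forall>u. u \<in> F \<longrightarrow> u \<noteq> 0 \<longrightarrow> L u \<noteq> u ^ 2)"
  proof
    assume H: "\<forall>x u. u \<noteq> 0 \<longrightarrow> f (x + u) \<noteq> f x"
    show "(\<forall>u. u \<notin> F \<longrightarrow> L u \<notin> F) \<and> (\<forall>u. u \<in> F \<longrightarrow> u \<noteq> 0 \<longrightarrow> L u \<noteq> u ^ 2)"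
    proof (intro conjI allI impI)
      fix u assume u: "u \<notin> F"
      show "L u \<notin> F"
      proof
        assume Lu: "L u \<in> F"
        have w: "wq u \<noteq> 0" using u wq_zero by blast
        have "T (u ^ (2 ^ m + 1)) + L u \<in> F" using Tr_inF Lu by (rule F_add)
        then obtain y where y: "T y = T (u ^ (2 ^ m + 1)) + L u" using Tr_surj by blast
        have "T ((y / wq u) * wq u) = T y" using w by simp
        then have "f ((y / wq u) + u) + f (y / wq u) = 0" using y diff by simp
        then have "f ((y / wq u) + u) = f (y / wq u)" by (simp add: add_eq0_iff)
        moreover have "u \<noteq> 0" using u by auto
        ultimately show False using H by blast
      qed
    next
      fix u assume u: "u \<in> F" "u \<noteq> 0"
      show "L u \<noteq> u ^ 2"
      proof
        assume Lu: "L u = u ^ 2"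
        have "wq u = 0" using u wq_zero by blast
        then have "f (0 + u) + f 0 = 0" using diff[of 0 u] Qf[OF u(1)] Lu by simp
        then have "f (0 + u) = f 0" by (simp add: add_eq0_iff)
        then show False using H u by blast
      qed
    qed
  next
    assume C: "(\<forall>u. u \<notin> F \<longrightarrow> L u \<notin> F) \<and> (\<forall>u. u \<in> F \<longrightarrow> u \<noteq> 0 \<longrightarrow> L u \<noteq> u ^ 2)"
    show "\<forall>x u. u \<noteq> 0 \<longrightarrow> f (x + u) \<noteq> f x"
    proof (intro allI impI notI)
      fix x u assume u: "u \<noteq> 0" and eq: "f (x + u) = f x"
      then have "T (u ^ (2 ^ m + 1)) + L u + T (x * wq u) = 0" using diff[of x u] by simp
      then have Lu: "L u = T (u ^ (2 ^ m + 1)) + T (x * wq u)" by (simp add: add_eq_iff algebra_simps)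
      show False
      proof (cases "u \<in> F")
        case True
        then have "wq u = 0" using wq_zero by blast
        then have "L u = u ^ 2" using Lu Qf[OF True] by simp
        then show False using C True u by blast
      next
        case False
        have "L u \<in> F" unfolding Lu using Tr_inF Tr_inF by (rule F_add)
        then show False using C False by blast
      qed
    qed
  qed
  finally show ?thesis unfolding f_def .
qed

end


context ffq
begin

definition Lf :: "'a \<Rightarrow> 'a \<Rightarrow> nat \<Rightarrow> nat \<Rightarrow> 'a \<Rightarrow> 'a" where
  "Lf a b k l u = a * u ^ (2 ^ k) + b * u ^ (2 ^ l)"

lemma Lf_add: "Lf a b k l (x + y) = Lf a b k l x + Lf a b k l y"
  unfolding Lf_def by (simp add: frob algebra_simps)

lemma Lf_0[simp]: "Lf a b k l 0 = 0" unfolding Lf_def by (simp add: zero_power)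

lemma Lf_eq0: "Lf a b k l u = 0 \<longleftrightarrow> a * u ^ (2 ^ k) = b * u ^ (2 ^ l)"
  unfolding Lf_def by (rule add_eq0_iff)

lemma F_pow2_cong: "x \<in> F \<Longrightarrow> k mod m = l mod m \<Longrightarrow> x ^ (2 ^ k) = x ^ (2 ^ l)"
proof -
  assume "x \<in> F" "k mod m = l mod m"
  then show ?thesis using F_pow2_mod[of x k] F_pow2_mod[of x l] by simp
qed

lemma Lf_F: "k mod m = l mod m \<Longrightarrow> c \<in> F \<Longrightarrow> Lf a b k l c = (a + b) * c ^ (2 ^ k)"
  unfolding Lf_def using F_pow2_cong[of c k l] by (simp add: algebra_simps)

lemma KLK:
  fixes a b :: 'a
  shows "(\<exists>u. u \<noteq> 0 \<and> a * u ^ (2 ^ k) = b * u ^ (2 ^ l)) \<longleftrightarrow>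
    a ^ ((2 ^ N - 1) div (2 ^ nat (gcd (int l - int k) (int N)) - 1)) =
    b ^ ((2 ^ N - 1) div (2 ^ nat (gcd (int l - int k) (int N)) - 1))"
proof -
  have "(\<exists>u. u \<noteq> 0 \<and> (\<exists>x. u = g ^ x) \<and> a * u ^ (2 ^ k) = b * u ^ (2 ^ l)) \<longleftrightarrow>
    a ^ ((2 ^ N - 1) div (2 ^ nat (gcd (int l - int k) (int N)) - 1)) =
    b ^ ((2 ^ N - 1) div (2 ^ nat (gcd (int l - int k) (int N)) - 1))"
    by (rule KL[OF ord N_pos]) (use gen in blast)+
  moreover have "(\<exists>u. u \<noteq> 0 \<and> (\<exists>x. u = g ^ x) \<and> a * u ^ (2 ^ k) = b * u ^ (2 ^ l)) \<longleftrightarrow>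
     (\<exists>u. u \<noteq> 0 \<and> a * u ^ (2 ^ k) = b * u ^ (2 ^ l))" using gen by blast
  ultimately show ?thesis by simp
qed

lemma KLF:
  fixes a b :: 'a
  assumes "a \<in> F" "b \<in> F"
  shows "(\<exists>u. u \<in> F \<and> u \<noteq> 0 \<and> a * u ^ (2 ^ k) = b * u ^ (2 ^ l)) \<longleftrightarrow>
    a ^ ((2 ^ m - 1) div (2 ^ nat (gcd (int l - int k) (int m)) - 1)) =
    b ^ ((2 ^ m - 1) div (2 ^ nat (gcd (int l - int k) (int m)) - 1))"
proof -
  have "(\<exists>u. u \<noteq> 0 \<and> (\<exists>x. u = hF ^ x) \<and> a * u ^ (2 ^ k) = b * u ^ (2 ^ l)) \<longleftrightarrow>
    a ^ ((2 ^ m - 1) div (2 ^ nat (gcd (int l - int k) (int m)) - 1)) =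
    b ^ ((2 ^ m - 1) div (2 ^ nat (gcd (int l - int k) (int m)) - 1))"
    by (rule KL[OF hF_ord]) (use assms m_pos F_char in auto)
  moreover have "(\<exists>u. u \<noteq> 0 \<and> (\<exists>x. u = hF ^ x) \<and> a * u ^ (2 ^ k) = b * u ^ (2 ^ l)) \<longleftrightarrow>
     (\<exists>u. u \<in> F \<and> u \<noteq> 0 \<and> a * u ^ (2 ^ k) = b * u ^ (2 ^ l))" using F_char by blast
  ultimately show ?thesis by simp
qed

lemma root2F: "x \<in> F \<Longrightarrow> \<exists>y. y \<in> F \<and> y ^ (2 ^ k) = x"
proof -
  assume x: "x \<in> F"
  have "N * k \<ge> k" using N_pos by simp
  then have "(x ^ (2 ^ (N * k - k))) ^ (2 ^ k) = x ^ (2 ^ (N * k))"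
    by (simp add: power_mult[symmetric] power_add[symmetric])
  then have "(x ^ (2 ^ (N * k - k))) ^ (2 ^ k) = x" by (simp add: fermat_mult)
  moreover have "x ^ (2 ^ (N * k - k)) \<in> F" using x by (rule F_power)
  ultimately show ?thesis by blast
qed

lemma Lf_inj:
  assumes "\<not> (\<exists>u. u \<noteq> 0 \<and> Lf a b k l u = 0)"
  shows "inj (Lf a b k l)"
proof (rule injI)
  fix x y assume "Lf a b k l x = Lf a b k l y"
  then have "Lf a b k l (x + y) = 0" by (simp add: Lf_add)
  then have "x + y = 0" using assms by blast
  then show "x = y" by (simp add: add_eq0_iff)
qed

lemma part1_notF:
  assumes kl: "k mod m = l mod m" and ab: "a + b \<notin> F"
  shows "\<not> (\<forall>u. u \<notin> F \<longrightarrow> Lf a b k l u \<notin> F)"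
proof
  assume C1: "\<forall>u. u \<notin> F \<longrightarrow> Lf a b k l u \<notin> F"
  have abnz: "a + b \<noteq> 0" using ab by auto
  show False
  proof (cases "\<exists>u. u \<noteq> 0 \<and> Lf a b k l u = 0")
    case True
    then obtain u where u: "u \<noteq> 0" "Lf a b k l u = 0" by blast
    have "u \<notin> F"
    proof
      assume "u \<in> F"
      then have "Lf a b k l u = (a + b) * u ^ (2 ^ k)" using kl by (simp add: Lf_F)
      then show False using u abnz by simp
    qed
    moreover have "Lf a b k l u \<in> F" using u(2) by simp
    ultimately show False using C1 by blast
  next
    case False
    have "inj (Lf a b k l)" using False by (rule Lf_inj)
    then have "surj (Lf a b k l)" by (rule finite_UNIV_inj_surj[OF finite_UNIV])
    then obtain u where u: "Lf a b k l u = 1" by (metis surjE)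
    have "u \<notin> F"
    proof
      assume uF: "u \<in> F"
      then have "u ^ (2 ^ k) * (a + b) = 1" using kl u by (simp add: Lf_F mult.commute)
      then have "inverse (u ^ (2 ^ k)) = a + b" by (rule inverse_unique)
      then have "a + b = inverse (u ^ (2 ^ k))" by simp
      moreover have "inverse (u ^ (2 ^ k)) \<in> F" using uF by (simp add: F_inverse F_power)
      ultimately show False using ab by simp
    qed
    moreover have "Lf a b k l u \<in> F" using u by simp
    ultimately show False using C1 by blast
  qed
qed

lemma part1_F_C1:
  assumes kl: "k mod m = l mod m" and ab: "a + b \<in> F" "a + b \<noteq> 0"
  shows "(\<forall>u. u \<notin> F \<longrightarrow> Lf a b k l u \<notin> F) \<longleftrightarrow> \<not> (\<exists>u. u \<noteq> 0 \<and> Lf a b k l u = 0)"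
proof
  assume C1: "\<forall>u. u \<notin> F \<longrightarrow> Lf a b k l u \<notin> F"
  show "\<not> (\<exists>u. u \<noteq> 0 \<and> Lf a b k l u = 0)"
  proof
    assume "\<exists>u. u \<noteq> 0 \<and> Lf a b k l u = 0"
    then obtain u where u: "u \<noteq> 0" "Lf a b k l u = 0" by blast
    have "u \<notin> F"
    proof
      assume "u \<in> F"
      then have "Lf a b k l u = (a + b) * u ^ (2 ^ k)" using kl by (simp add: Lf_F)
      then show False using u ab by simp
    qed
    moreover have "Lf a b k l u \<in> F" using u(2) by simp
    ultimately show False using C1 by blast
  qed
next
  assume nk: "\<not> (\<exists>u. u \<noteq> 0 \<and> Lf a b k l u = 0)"
  show "\<forall>u. u \<notin> F \<longrightarrow> Lf a b k l u \<notin> F"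
  proof (intro allI impI notI)
    fix u assume u: "u \<notin> F" and Lu: "Lf a b k l u \<in> F"
    have "Lf a b k l u / (a + b) \<in> F" using Lu ab by (simp add: F_divide)
    then obtain r where r: "r \<in> F" "r ^ (2 ^ k) = Lf a b k l u / (a + b)" using root2F by blast
    have "Lf a b k l r = Lf a b k l u" using kl r ab by (simp add: Lf_F)
    then have "r = u" using Lf_inj[OF nk] by (simp add: inj_eq)
    then show False using u r by simp
  qed
qed

lemma s_gcd: "gcd (1 - int k) (int m) = gcd (int k - 1) (int m)"
proof -
  have "gcd (- (int k - 1)) (int m) = gcd (int k - 1) (int m)" by (rule gcd_neg1_int)
  then show ?thesis by simp
qed

lemma part1_F_C2:
  assumes kl: "k mod m = l mod m" and ab: "a + b \<in> F"
  shows "(\<forall>u. u \<in> F \<longrightarrow> u \<noteq> 0 \<longrightarrow> Lf a b k l u \<noteq> u ^ 2) \<longleftrightarrow>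
     (a + b) ^ ((2 ^ m - 1) div (2 ^ nat (gcd (int k - 1) (int m)) - 1)) \<noteq> 1"
proof -
  have "(\<forall>u. u \<in> F \<longrightarrow> u \<noteq> 0 \<longrightarrow> Lf a b k l u \<noteq> u ^ 2) \<longleftrightarrow>
     \<not> (\<exists>u. u \<in> F \<and> u \<noteq> 0 \<and> (a + b) * u ^ (2 ^ k) = 1 * u ^ (2 ^ 1))"
    using Lf_F[OF kl] by (simp add: power2_eq_square) blast
  also have "\<dots> \<longleftrightarrow> \<not> ((a + b) ^ ((2 ^ m - 1) div (2 ^ nat (gcd (int 1 - int k) (int m)) - 1)) =
      1 ^ ((2 ^ m - 1) div (2 ^ nat (gcd (int 1 - int k) (int m)) - 1)))"
    using KLF[OF ab F_1, of k 1] by simp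
  finally show ?thesis using s_gcd by simp
qed

end


lemma pow_fix_iter: "(x::'a::monoid_mult) ^ Q = x \<Longrightarrow> x ^ (Q ^ j) = x"
proof (induction j)
  case (Suc j)
  have "x ^ (Q ^ Suc j) = (x ^ (Q ^ j)) ^ Q" by (simp only: power_Suc2 power_mult)
  then show ?case using Suc by simp
qed simp

context ffq
begin

lemma exists_nonF_fixed:
  assumes e2: "e \<ge> 2" and en: "e dvd n"
  shows "\<exists>v. v \<notin> F \<and> v ^ ((2 ^ m) ^ e) = v"
proof -
  define Qe :: nat where "Qe = 2 ^ (m * e) - 1"
  define D :: nat where "D = 2 ^ N - 1"
  obtain c where nc: "n = e * c" using en by blast
  have "int Qe dvd int D"
    using two_pow_dvd_int[of "m * e" c] unfolding Qe_def D_def by (simp add: Nmn nc of_nat_diff mult.assoc)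
  then have QeD: "Qe dvd D" by simp
  define R where "R = D div Qe"
  have DR: "D = R * Qe" unfolding R_def using QeD by simp
  define v where "v = g ^ R"
  have Qe_pos: "Qe > 0" unfolding Qe_def using one_less_power[of "2::nat" "m * e"] m_pos e2 by simp
  have qe: "((2::nat) ^ m) ^ e = Qe + 1" unfolding Qe_def by (simp add: power_mult)
  have vfix: "v ^ ((2 ^ m) ^ e) = v"
  proof -
    have "v ^ ((2 ^ m) ^ e) = v * g ^ (R * Qe)" unfolding qe v_def by (simp add: power_add power_mult)
    also have "g ^ (R * Qe) = 1" unfolding DR[symmetric] D_def by (subst ord) simp
    finally show ?thesis by simp
  qed
  have notF: "v \<notin> F"
  proof
    assume "v \<in> F"
    then have "g ^ (R * 2 ^ m) = g ^ R" unfolding v_def by (simp add: inF power_mult)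
    then have "int D dvd int (R * 2 ^ m) - int R" unfolding D_def using gpow_eq by blast
    also have "int (R * 2 ^ m) - int R = int (R * (2 ^ m - 1))" using qm1_pos by (simp add: of_nat_diff algebra_simps)
    finally have "R * Qe dvd R * (2 ^ m - 1)" unfolding DR by (simp only: int_dvd_int_iff)
    moreover have "R > 0" using DR D_pos unfolding D_def by (cases R) auto
    ultimately have "Qe dvd 2 ^ m - 1" by simp
    then have "Qe \<le> 2 ^ m - 1" using qm1_pos by (simp add: dvd_imp_le)
    moreover have "(2::nat) ^ (m * e) \<ge> 2 ^ (m * 2)" using e2 by (intro power_increasing) auto
    moreover have "(2::nat) ^ (m * 2) > 2 ^ m" using m_pos by (intro power_strict_increasing) auto
    moreover have "(2::nat) ^ m \<ge> 1" "(2::nat) ^ (m * e) \<ge> 1" by simp_all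
    ultimately show False unfolding Qe_def by arith
  qed
  show ?thesis using vfix notF by blast
qed

lemma ker_phi_F:
  assumes cop: "gcd t n = 1" and n1: "n > 1"
  shows "v ^ ((2 ^ m) ^ t) = v \<longleftrightarrow> v \<in> F"
proof
  assume vt: "v ^ ((2 ^ m) ^ t) = v"
  have "t \<noteq> 0"
  proof
    assume "t = 0"
    then have "gcd t n = n" by simp
    then show False using cop n1 by simp
  qed
  then obtain x y where xy: "t * x = n * y + gcd t n" using bezout_nat by blast
  then have "(t * x) mod n = (1 + n * y) mod n" using cop by simp
  also have "\<dots> = 1 mod n" by (rule mod_mult_self2)
  also have "\<dots> = 1" using n1 by simp
  finally have txm: "(t * x) mod n = 1" .
  have "v ^ (((2 ^ m) ^ t) ^ x) = v" using vt by (rule pow_fix_iter)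
  then have "v ^ ((2 ^ m) ^ (t * x)) = v" by (simp add: power_mult)
  then have "v ^ ((2 ^ m) ^ ((t * x) mod n)) = v" using powq_mod[of v "t * x"] by simp
  then show "v \<in> F" using txm by (simp add: inF)
next
  assume "v \<in> F"
  then show "v ^ ((2 ^ m) ^ t) = v" by (rule F_powq)
qed

lemma range_phi:
  assumes cop: "gcd t n = 1" and n1: "n > 1"
  shows "range (\<lambda>v. v + v ^ ((2 ^ m) ^ t)) = {y. T y = 0}"
proof -
  define \<phi> where "\<phi> v = v + v ^ ((2 ^ m) ^ t)" for v :: 'a
  have add: "\<phi> (x + y) = \<phi> x + \<phi> y" for x y unfolding \<phi>_def by (simp add: frobq algebra_simps)
  have ker: "{x. \<phi> x = 0} = F"
  proof (rule Set.set_eqI)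
    fix x
    have "x \<in> {x. \<phi> x = 0} \<longleftrightarrow> x = x ^ ((2 ^ m) ^ t)" unfolding \<phi>_def by (simp only: mem_Collect_eq add_eq0_iff)
    also have "\<dots> \<longleftrightarrow> x ^ ((2 ^ m) ^ t) = x" by (rule eq_commute)
    also have "\<dots> \<longleftrightarrow> x \<in> F" by (rule ker_phi_F[OF cop n1])
    finally show "x \<in> {x. \<phi> x = 0} \<longleftrightarrow> x \<in> F" .
  qed
  have rT: "range T = F" using Tr_inF Tr_surj by blast
  have "card (UNIV::'a set) = card (range \<phi>) * card {x. \<phi> x = 0}" by (rule rank_nullity[OF add])
  moreover have "card (UNIV::'a set) = card (range T) * card {x. T x = 0}" by (rule rank_nullity[OF Tr_add])
  ultimately have "card (range \<phi>) * 2 ^ m = card {x. T x = 0} * 2 ^ m"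
    unfolding ker rT card_F by (simp add: mult.commute)
  then have c: "card (range \<phi>) = card {x. T x = 0}" by simp
  have sub: "range \<phi> \<subseteq> {x. T x = 0}"
  proof
    fix y assume "y \<in> range \<phi>"
    then obtain v where v: "y = \<phi> v" by blast
    have "T (\<phi> v) = T v + T v" unfolding \<phi>_def by (simp only: Tr_add Tr_powq_iter)
    then show "y \<in> {x. T x = 0}" using v by simp
  qed
  have "range \<phi> = {x. T x = 0}" by (rule card_subset_eq[OF finite sub c])
  then show ?thesis unfolding \<phi>_def .
qed

lemma part1_zero_le:
  assumes kl: "k mod m = l mod m" and kle: "k \<le> l" and a: "a \<noteq> 0"
  shows "(\<forall>u. u \<notin> F \<longrightarrow> Lf a a k l u \<notin> F) \<longleftrightarrow>
    (nat (gcd (int l - int k) (int N)) = m \<and> T (inverse a) \<noteq> 0)"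
proof -
  have "m dvd l - k" using mod_eq_dvd_iff_nat[OF kle, of m] kl[symmetric] by blast
  then obtain t where lt: "l - k = m * t" by blast
  have l_eq: "l = k + m * t" using lt kle by simp
  define \<phi> where "\<phi> v = v + v ^ ((2 ^ m) ^ t)" for v :: 'a
  have e2: "(2::nat) ^ l = 2 ^ k * (2 ^ m) ^ t" unfolding l_eq by (simp add: power_add power_mult)
  have pw: "u ^ (2 ^ l) = (u ^ (2 ^ k)) ^ ((2 ^ m) ^ t)" for u :: 'a by (simp only: e2 power_mult)
  have Lphi: "Lf a a k l u = a * \<phi> (u ^ (2 ^ k))" for u unfolding Lf_def \<phi>_def pw by (simp add: distrib_left)
  have notF_iff: "u \<in> F \<longleftrightarrow> u ^ (2 ^ k) \<in> F" for u
  proof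
    assume "u \<in> F" then show "u ^ (2 ^ k) \<in> F" by (rule F_power)
  next
    assume "u ^ (2 ^ k) \<in> F"
    then have "(u ^ (2 ^ k)) ^ (2 ^ m) = u ^ (2 ^ k)" by (simp add: inF)
    then have "(u ^ (2 ^ m)) ^ (2 ^ k) = u ^ (2 ^ k)" by (simp add: pow_comm)
    then have "u ^ (2 ^ m) = u" by (rule pow2_inj)
    then show "u \<in> F" by (simp add: inF)
  qed
  have C1eq: "(\<forall>u. u \<notin> F \<longrightarrow> Lf a a k l u \<notin> F) \<longleftrightarrow> (\<forall>v. v \<notin> F \<longrightarrow> a * \<phi> v \<notin> F)"
  proof
    assume H: "\<forall>u. u \<notin> F \<longrightarrow> Lf a a k l u \<notin> F"
    show "\<forall>v. v \<notin> F \<longrightarrow> a * \<phi> v \<notin> F"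
    proof (intro allI impI)
      fix v assume v: "v \<notin> F"
      obtain u where u: "u ^ (2 ^ k) = v" using root2 by blast
      have "u \<notin> F" using notF_iff[of u] u v by simp
      then have "Lf a a k l u \<notin> F" using H by blast
      then show "a * \<phi> v \<notin> F" using Lphi[of u] u by simp
    qed
  next
    assume H: "\<forall>v. v \<notin> F \<longrightarrow> a * \<phi> v \<notin> F"
    show "\<forall>u. u \<notin> F \<longrightarrow> Lf a a k l u \<notin> F"
    proof (intro allI impI)
      fix u assume "u \<notin> F"
      then have "u ^ (2 ^ k) \<notin> F" using notF_iff by blast
      then show "Lf a a k l u \<notin> F" using H Lphi by simp
    qed
  qed
  have d_eq: "nat (gcd (int l - int k) (int N)) = m * gcd t n"
  proof -
    have "int l - int k = int (m * t)" using lt kle by (simp add: of_nat_diff[symmetric])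
    then have "gcd (int l - int k) (int N) = int (gcd (m * t) (m * n))" unfolding Nmn by (simp only: gcd_int_int_eq)
    then show ?thesis by (simp add: gcd_mult_distrib_nat)
  qed
  show ?thesis
  proof (cases "gcd t n = 1")
    case False
    have "gcd t n > 0" using n_pos by simp
    then have e2: "gcd t n \<ge> 2" using False by linarith
    obtain v where v: "v \<notin> F" "v ^ ((2 ^ m) ^ gcd t n) = v"
      using exists_nonF_fixed[OF e2] by auto
    obtain c where tc: "t = gcd t n * c" by (metis gcd_dvd1 dvdE)
    have "v ^ (((2 ^ m) ^ gcd t n) ^ c) = v" using v(2) by (rule pow_fix_iter)
    then have "v ^ ((2 ^ m) ^ t) = v" by (subst tc) (simp add: power_mult)
    then have "\<phi> v = 0" unfolding \<phi>_def by simp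
    then have "\<not> (\<forall>v. v \<notin> F \<longrightarrow> a * \<phi> v \<notin> F)" using v(1) by (metis F_0 mult_zero_right)
    moreover have "nat (gcd (int l - int k) (int N)) \<noteq> m" using d_eq False m_pos by simp
    ultimately show ?thesis using C1eq by blast
  next
    case cop: True
    have dm: "nat (gcd (int l - int k) (int N)) = m" using d_eq cop by simp
    show ?thesis
    proof (cases "n = 1")
      case True
      have allF: "x \<in> F" for x :: 'a
      proof -
        have "x ^ (2 ^ N) = x" by (rule fermat)
        then show ?thesis using True Nmn by (simp add: inF)
      qed
      have "T (inverse a) = inverse a" using allF by (simp add: Tr_F)
      then show ?thesis using dm a allF by simp
    next
      case False
      then have n1: "n > 1" using n_pos by simp
      have ker: "\<phi> v = 0 \<longleftrightarrow> v \<in> F" for v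
        unfolding \<phi>_def add_eq0_iff using ker_phi_F[OF cop n1, of v] by auto
      have rng: "range \<phi> = {y. T y = 0}" unfolding \<phi>_def by (rule range_phi[OF cop n1])
      have Tphi: "T (\<phi> v) = 0" for v unfolding \<phi>_def by (simp only: Tr_add Tr_powq_iter add_self)
      have "(\<forall>v. v \<notin> F \<longrightarrow> a * \<phi> v \<notin> F) \<longleftrightarrow> T (inverse a) \<noteq> 0"
      proof
        assume H: "\<forall>v. v \<notin> F \<longrightarrow> a * \<phi> v \<notin> F"
        show "T (inverse a) \<noteq> 0"
        proof
          assume "T (inverse a) = 0"
          then have "inverse a \<in> range \<phi>" using rng by simp
          then obtain v where v: "\<phi> v = inverse a" by auto
          have "v \<notin> F" using ker[of v] v a by auto
          moreover have "a * \<phi> v \<in> F" using v a by simp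
          ultimately show False using H by blast
        qed
      next
        assume Ta: "T (inverse a) \<noteq> 0"
        show "\<forall>v. v \<notin> F \<longrightarrow> a * \<phi> v \<notin> F"
        proof (intro allI impI notI)
          fix v assume v: "v \<notin> F" and c: "a * \<phi> v \<in> F"
          have pnz: "\<phi> v \<noteq> 0" using ker v by blast
          have pv: "\<phi> v = (a * \<phi> v) * inverse a" using a by simp
          have "T (\<phi> v) = (a * \<phi> v) * T (inverse a)"
            by (subst pv) (rule Tr_smult[OF c])
          moreover have "a * \<phi> v \<noteq> 0" using a pnz by simp
          ultimately show False using Ta Tphi by simp
        qed
      qed
      then show ?thesis using C1eq dm by simp
    qed
  qed
qed

lemma part1_zero:
  assumes kl: "k mod m = l mod m" and a: "a \<noteq> 0"
  shows "(\<forall>u. u \<notin> F \<longrightarrow> Lf a a k l u \<notin> F) \<longleftrightarrow>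
    (nat (gcd (int l - int k) (int N)) = m \<and> T (inverse a) \<noteq> 0)"
proof (cases "k \<le> l")
  case True show ?thesis by (rule part1_zero_le[OF kl True a])
next
  case False
  have "(\<forall>u. u \<notin> F \<longrightarrow> Lf a a l k u \<notin> F) \<longleftrightarrow>
    (nat (gcd (int k - int l) (int N)) = m \<and> T (inverse a) \<noteq> 0)"
    using part1_zero_le[OF kl[symmetric] _ a] False by simp
  moreover have "Lf a a l k = Lf a a k l" unfolding Lf_def by (simp add: fun_eq_iff add.commute)
  moreover have "gcd (int k - int l) (int N) = gcd (int l - int k) (int N)"
    by (metis gcd_neg1_int minus_diff_eq)
  ultimately show ?thesis by simp
qed

end


context ffq
begin

lemma f_Lf: "(\<lambda>x. T (x ^ (2 ^ m + 1)) + a * x ^ (2 ^ k) + b * x ^ (2 ^ l)) = (\<lambda>x. T (x ^ (2 ^ m + 1)) + Lf a b k l x)"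
  by (simp add: Lf_def add.assoc fun_eq_iff)

lemma bij_iff:
  "bij (\<lambda>x. T (x ^ (2 ^ m + 1)) + a * x ^ (2 ^ k) + b * x ^ (2 ^ l)) \<longleftrightarrow>
    (\<forall>u. u \<notin> F \<longrightarrow> Lf a b k l u \<notin> F) \<and> (\<forall>u. u \<in> F \<longrightarrow> u \<noteq> 0 \<longrightarrow> Lf a b k l u \<noteq> u ^ 2)"
  unfolding f_Lf by (rule MC[of "Lf a b k l", OF Lf_add])

lemma part1:
  assumes kl: "k mod m = l mod m" and Lnz: "\<exists>x. a * x ^ (2 ^ k) + b * x ^ (2 ^ l) \<noteq> 0"
  shows "bij (\<lambda>x. T (x ^ (2 ^ m + 1)) + a * x ^ (2 ^ k) + b * x ^ (2 ^ l)) \<longleftrightarrow>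
   ((a + b \<in> F \<and> a + b \<noteq> 0 \<and> (a + b) ^ ((2 ^ m - 1) div (2 ^ nat (gcd (int k - 1) (int m)) - 1)) \<noteq> 1 \<and>
      a ^ ((2 ^ N - 1) div (2 ^ nat (gcd (int l - int k) (int N)) - 1)) \<noteq>
      b ^ ((2 ^ N - 1) div (2 ^ nat (gcd (int l - int k) (int N)) - 1)))
    \<or> (a + b = 0 \<and> nat (gcd (int l - int k) (int N)) = m \<and> T (inverse a) \<noteq> 0))"
  (is "?B \<longleftrightarrow> ?R")
proof (cases "a + b = 0")
  case True
  then have ba: "b = a" by (simp add: add_eq0_iff)
  have a: "a \<noteq> 0" using Lnz ba by auto
  have C2: "\<forall>u. u \<in> F \<longrightarrow> u \<noteq> 0 \<longrightarrow> Lf a b k l u \<noteq> u ^ 2"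
    using Lf_F[OF kl] True by simp
  have "?B \<longleftrightarrow> (\<forall>u. u \<notin> F \<longrightarrow> Lf a a k l u \<notin> F)" using bij_iff C2 ba by simp
  also have "\<dots> \<longleftrightarrow> (nat (gcd (int l - int k) (int N)) = m \<and> T (inverse a) \<noteq> 0)"
    by (rule part1_zero[OF kl a])
  finally show ?thesis using True by simp
next
  case False
  show ?thesis
  proof (cases "a + b \<in> F")
    case notF: False
    have "\<not> ?B" using bij_iff part1_notF[OF kl notF] by simp
    moreover have "\<not> ?R" using notF False by simp
    ultimately show ?thesis by simp
  next
    case True
    have "?B \<longleftrightarrow> \<not> (\<exists>u. u \<noteq> 0 \<and> Lf a b k l u = 0) \<and>
       (a + b) ^ ((2 ^ m - 1) div (2 ^ nat (gcd (int k - 1) (int m)) - 1)) \<noteq> 1"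
      using bij_iff part1_F_C1[OF kl True False] part1_F_C2[OF kl True] by simp
    also have "(\<exists>u. u \<noteq> 0 \<and> Lf a b k l u = 0) \<longleftrightarrow>
      a ^ ((2 ^ N - 1) div (2 ^ nat (gcd (int l - int k) (int N)) - 1)) =
      b ^ ((2 ^ N - 1) div (2 ^ nat (gcd (int l - int k) (int N)) - 1))"
      unfolding Lf_eq0 by (rule KLK)
    finally show ?thesis using True False by auto
  qed
qed

end


context ffq
begin

lemma p2_A:
  assumes C1: "\<forall>u. u \<notin> F \<longrightarrow> Lf a b k l u \<notin> F"
  shows "\<forall>c. c \<in> F \<longrightarrow> Lf a b k l c \<in> F"
proof -
  define \<psi> where "\<psi> y = y ^ (2 ^ m) + y" for y :: 'a
  define \<phi> where "\<phi> u = \<psi> (Lf a b k l u)" for u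
  have psi_add: "\<psi> (x + y) = \<psi> x + \<psi> y" for x y unfolding \<psi>_def by (simp add: frob algebra_simps)
  have phi_add: "\<phi> (x + y) = \<phi> x + \<phi> y" for x y unfolding \<phi>_def by (simp add: Lf_add psi_add)
  have kpsi: "{x. \<psi> x = 0} = F" unfolding \<psi>_def by (auto simp: add_eq0_iff inF)
  have kphi: "{x. \<phi> x = 0} = {u. Lf a b k l u \<in> F}" unfolding \<phi>_def \<psi>_def by (auto simp: add_eq0_iff inF)
  have sub: "{x. \<phi> x = 0} \<subseteq> F" unfolding kphi using C1 by blast
  have r1: "card (UNIV::'a set) = card (range \<psi>) * 2 ^ m"
    using rank_nullity[OF psi_add] unfolding kpsi card_F .
  have r2: "card (UNIV::'a set) = card (range \<phi>) * card {x. \<phi> x = 0}"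
    by (rule rank_nullity[OF phi_add])
  have "range \<phi> \<subseteq> range \<psi>" unfolding \<phi>_def by auto
  then have "card (range \<phi>) \<le> card (range \<psi>)" by (intro card_mono) auto
  then have "card (range \<psi>) * 2 ^ m \<le> card (range \<psi>) * card {x. \<phi> x = 0}"
    using r1 r2 by (metis mult_le_mono1)
  moreover have "card (range \<psi>) > 0" by (simp add: card_gt_0_iff)
  ultimately have "2 ^ m \<le> card {x. \<phi> x = 0}" by simp
  then have "{x. \<phi> x = 0} = F" using card_seteq[OF finite sub] card_F by simp
  then show ?thesis unfolding kphi by blast
qed

lemma m2_of:
  assumes "k mod m \<noteq> l mod m" shows "m \<ge> 2"
proof (rule ccontr)
  assume "\<not> m \<ge> 2"
  then have "m = 1" using m_pos by simp
  then show False using assms by simp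
qed

lemma hF_F: "hF \<in> F"
proof -
  have "hF = hF ^ 1" by simp
  then have "\<exists>i. hF = hF ^ i" by blast
  then show ?thesis by (simp only: F_char) simp
qed

lemma hF_nz: "hF \<noteq> 0" unfolding hF_def using g_nz by simp

lemma p2_ab:
  assumes kl: "k mod m \<noteq> l mod m" and l1: "l mod m = 1 mod m"
    and LF: "\<forall>c. c \<in> F \<longrightarrow> Lf a b k l c \<in> F"
  shows "a \<in> F \<and> b \<in> F"
proof -
  have m2: "m \<ge> 2" by (rule m2_of[OF kl])
  have l1': "l mod m = 1" using l1 m2 by simp
  define k' where "k' = k mod m"
  have k'm: "k' < m" unfolding k'_def using m2 by simp
  have k'1: "k' \<noteq> 1" using kl l1' unfolding k'_def by simp
  have "Lf a b k l 1 \<in> F" using LF F_1 by blast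
  then have ab: "a + b \<in> F" unfolding Lf_def by simp
  define X where "X = hF ^ (2 ^ k)"
  define Y where "Y = hF ^ (2 ^ l)"
  have Y2: "Y = hF ^ (2 ^ k') \<Longrightarrow> False"
  proof -
    assume "Y = hF ^ (2 ^ k')"
    moreover have "Y = hF ^ (2 ^ 1)" unfolding Y_def using F_pow2_mod[OF hF_F, of l] l1' by simp
    ultimately have "hF ^ (2 ^ k') = hF ^ (2 ^ 1)" by simp
    then have dv: "int (2 ^ m - 1) dvd int (2 ^ k') - int (2 ^ 1)" using hpow_eq[OF hF_ord qm1_pos] by blast
    have pm: "(2::int) ^ m = 2 * 2 ^ (m - 1)"
    proof -
      have "m = Suc (m - 1)" using m2 by simp
      then show ?thesis by (metis power_Suc)
    qed
    have pm4: "(2::int) ^ (m - 1) \<ge> 2" using power_increasing[of 1 "m - 1" "2::int"] m2 by simp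
    have "(2::int) ^ k' \<noteq> 2 ^ 1" using k'1 by (subst power_inject_exp) simp_all
    then have nz: "(2::int) ^ k' - 2 \<noteq> 0" by simp
    have dv': "int (2 ^ m - 1) dvd (2::int) ^ k' - 2" using dv by simp
    have lt: "\<bar>(2::int) ^ k' - 2\<bar> < int (2 ^ m - 1)"
    proof -
      have B: "int (2 ^ m - 1) = (2::int) ^ m - 1" by (simp add: of_nat_diff)
      show ?thesis
      proof (cases "k' = 0")
        case True
        then have "(2::int) ^ k' = 1" by simp
        then show ?thesis unfolding B using pm pm4 by arith
      next
        case False
        then have "k' \<ge> 2" using k'1 by simp
        then have "(2::int) ^ k' \<ge> 2 ^ 2" by (intro power_increasing) auto
        then have A1: "(2::int) ^ k' \<ge> 4" by simp
        have A2: "(2::int) ^ k' \<le> 2 ^ (m - 1)" using k'm by (intro power_increasing) auto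
        show ?thesis unfolding B using A1 A2 pm by arith
      qed
    qed
    have "\<bar>int (2 ^ m - 1)\<bar> \<le> \<bar>(2::int) ^ k' - 2\<bar>" by (rule dvd_imp_le_int[OF nz dv'])
    then show False using lt by simp
  qed
  have XY: "X + Y \<noteq> 0"
  proof
    assume "X + Y = 0"
    then have "X = Y" by (simp add: add_eq0_iff)
    moreover have "X = hF ^ (2 ^ k')" unfolding X_def k'_def by (rule F_pow2_mod[OF hF_F])
    ultimately show False using Y2 by simp
  qed
  have XYF: "X + Y \<in> F" unfolding X_def Y_def using hF_F by (intro F_add F_power)
  have "Lf a b k l hF \<in> F" using LF hF_F by blast
  then have "a * X + b * Y \<in> F" unfolding Lf_def X_def Y_def .
  moreover have "(a + b) * Y \<in> F" using ab hF_F unfolding Y_def by (intro F_mult F_power)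
  ultimately have "a * X + b * Y + (a + b) * Y \<in> F" by (rule F_add)
  moreover have "a * X + b * Y + (a + b) * Y = a * (X + Y)" by (simp add: algebra_simps)
  ultimately have "a * (X + Y) \<in> F" by simp
  then have "a * (X + Y) / (X + Y) \<in> F" using XYF by (rule F_divide)
  then have aF: "a \<in> F" using XY by simp
  have "(a + b) + a \<in> F" using ab aF by (rule F_add)
  moreover have "(a + b) + a = b" by (simp add: add.commute add.left_commute)
  ultimately have "b \<in> F" by simp
  then show ?thesis using aF by simp
qed

lemma Tr_pow2: "T (y ^ (2 ^ k)) = (T y) ^ (2 ^ k)"
  unfolding Tr_def by (simp add: frob_sum pow_comm[of y _ "2 ^ k"])

lemma Tr_Lf: "a \<in> F \<Longrightarrow> b \<in> F \<Longrightarrow> T (Lf a b k l y) = Lf a b k l (T y)"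
  unfolding Lf_def by (simp add: Tr_add Tr_smult Tr_pow2)

lemma Lf_in_F: "a \<in> F \<Longrightarrow> b \<in> F \<Longrightarrow> c \<in> F \<Longrightarrow> Lf a b k l c \<in> F"
  unfolding Lf_def by (intro F_add F_mult F_power)

lemma p2_B:
  assumes a: "a \<in> F" and b: "b \<in> F"
  shows "(\<forall>u. u \<notin> F \<longrightarrow> Lf a b k l u \<notin> F) \<longleftrightarrow> (\<forall>u. Lf a b k l u = 0 \<longrightarrow> u \<in> F)"
proof
  assume H: "\<forall>u. u \<notin> F \<longrightarrow> Lf a b k l u \<notin> F"
  show "\<forall>u. Lf a b k l u = 0 \<longrightarrow> u \<in> F"
  proof (intro allI impI)
    fix u assume "Lf a b k l u = 0"
    then have "Lf a b k l u \<in> F" by simp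
    then show "u \<in> F" using H by blast
  qed
next
  assume H: "\<forall>u. Lf a b k l u = 0 \<longrightarrow> u \<in> F"
  show "\<forall>u. u \<notin> F \<longrightarrow> Lf a b k l u \<notin> F"
  proof (intro allI impI notI)
    fix u assume u: "u \<notin> F" and Lu: "Lf a b k l u \<in> F"
    define w where "w = u + T u"
    have TTu: "T (T u) = T u" using Tr_inF by (rule Tr_F)
    have Tw: "T w = 0" unfolding w_def by (simp add: Tr_add TTu)
    have "Lf a b k l (T u) \<in> F" using a b Tr_inF by (rule Lf_in_F)
    then have LwF: "Lf a b k l w \<in> F" unfolding w_def Lf_add using Lu by (intro F_add)
    have "T (Lf a b k l w) = Lf a b k l (T w)" using a b by (rule Tr_Lf)
    also have "\<dots> = 0" using Tw by simp
    finally have "Lf a b k l w = 0" using Tr_F[OF LwF] by simp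
    then have "w \<in> F" using H by blast
    then have "w + T u \<in> F" using Tr_inF by (rule F_add)
    moreover have "w + T u = u" unfolding w_def by (simp add: add.assoc)
    ultimately show False using u by simp
  qed
qed

lemma p2_D:
  assumes a: "a \<in> F" and b: "b \<in> F" and l1: "l mod m = 1 mod m"
  shows "(\<forall>u. u \<in> F \<longrightarrow> u \<noteq> 0 \<longrightarrow> Lf a b k l u \<noteq> u ^ 2) \<longleftrightarrow>
     a ^ ((2 ^ m - 1) div (2 ^ nat (gcd (int k - 1) (int m)) - 1)) \<noteq>
     (b + 1) ^ ((2 ^ m - 1) div (2 ^ nat (gcd (int k - 1) (int m)) - 1))"
proof -
  have Fl: "u ^ (2 ^ l) = u ^ (2 ^ 1)" if "u \<in> F" for u
    using F_pow2_cong[OF that, of l 1] l1 by simp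
  have eq: "Lf a b k l u = u ^ 2 \<longleftrightarrow> a * u ^ (2 ^ k) = (b + 1) * u ^ (2 ^ 1)" if "u \<in> F" for u
  proof -
    have "Lf a b k l u = a * u ^ (2 ^ k) + b * u ^ (2 ^ 1)" unfolding Lf_def using Fl[OF that] by simp
    moreover have "u ^ 2 = u ^ (2 ^ 1)" by simp
    moreover have "(b + 1) * u ^ (2 ^ 1) = u ^ (2 ^ 1) + b * u ^ (2 ^ 1)" by (simp add: distrib_right add.commute)
    ultimately show ?thesis by (simp only: add_eq_iff)
  qed
  have "(\<forall>u. u \<in> F \<longrightarrow> u \<noteq> 0 \<longrightarrow> Lf a b k l u \<noteq> u ^ 2) \<longleftrightarrow>
     \<not> (\<exists>u. u \<in> F \<and> u \<noteq> 0 \<and> a * u ^ (2 ^ k) = (b + 1) * u ^ (2 ^ 1))"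
    using eq by blast
  also have "\<dots> \<longleftrightarrow> \<not> (a ^ ((2 ^ m - 1) div (2 ^ nat (gcd (int 1 - int k) (int m)) - 1)) =
      (b + 1) ^ ((2 ^ m - 1) div (2 ^ nat (gcd (int 1 - int k) (int m)) - 1)))"
    using KLF[OF a F_add[OF b F_1], of k 1] by simp
  finally show ?thesis using s_gcd by simp
qed

end


lemma coprime_cancel_int:
  fixes x A D G R :: int
  assumes dv: "D dvd x * A" and gA: "gcd A D = G" and DGR: "D = G * R" and G: "G > 0"
  shows "R dvd x"
proof -
  obtain A' where A': "A = G * A'" using gA by (metis gcd_dvd1 dvdE)
  have "G * gcd A' R = gcd (G * A') (G * R)" using G by (simp add: gcd_mult_left)
  then have "G * gcd A' R = G" using gA A' DGR by simp
  then have "gcd A' R = 1" using G by simp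
  then have cop: "coprime R A'" by (simp add: coprime_iff_gcd_eq_1 gcd.commute)
  have "G * R dvd G * (x * A')" using dv DGR A' by (simp add: algebra_simps)
  then have "R dvd x * A'" using G by simp
  then show ?thesis using cop by (simp add: coprime_dvd_mult_left_iff)
qed

context ffq
begin

definition "dd k l = nat (gcd (int l - int k) (int N))"

lemma dd_pos: "dd k l > 0"
proof -
  have "int N \<noteq> 0" using N_pos by simp
  then have "gcd (int l - int k) (int N) > 0" by (simp only: gcd_pos_int) simp
  then show ?thesis unfolding dd_def by simp
qed

lemma dd_dvd: "dd k l dvd N"
proof -
  have "gcd (int l - int k) (int N) dvd int N" by simp
  then have "int (dd k l) dvd int N" unfolding dd_def by simp
  then show ?thesis by simp
qed

lemma G_dvd_D: "int (2 ^ dd k l - 1) dvd int (2 ^ N - 1)"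
proof -
  obtain c where c: "N = dd k l * c" using dd_dvd by blast
  have "(2::int) ^ dd k l - 1 dvd 2 ^ N - 1" using two_pow_dvd_int[of "dd k l" c] by (simp only: c[symmetric])
  then show ?thesis by (simp add: of_nat_diff)
qed

lemma gcd_A: "gcd ((2::int) ^ k - 2 ^ l) (int (2 ^ N - 1)) = int (2 ^ dd k l - 1)"
proof -
  have "gcd ((2::int) ^ l - 2 ^ k) (2 ^ N - 1) = 2 ^ dd k l - 1"
    unfolding dd_def by (rule gcd_pow_diff[OF N_pos])
  moreover have "gcd ((2::int) ^ k - 2 ^ l) (2 ^ N - 1) = gcd ((2::int) ^ l - 2 ^ k) (2 ^ N - 1)"
    by (metis gcd_neg1_int minus_diff_eq)
  ultimately show ?thesis by (simp add: of_nat_diff)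
qed

lemma G_dvd_A: "int (2 ^ dd k l - 1) dvd (2::int) ^ k - 2 ^ l"
  using gcd_A[of k l] by (metis gcd_dvd1)

lemma eF_eq: "dd k l dvd m \<Longrightarrow> nat (gcd (int l - int k) (int m)) = dd k l"
proof -
  assume dm: "dd k l dvd m"
  let ?x = "int l - int k"
  have g1: "gcd ?x (int m) dvd gcd ?x (int N)"
    by (simp add: Nmn gcd_dvd1 gcd_dvd2 dvd_trans[OF _ dvd_triv_left] gcd_greatest)
  have "int (dd k l) dvd int m" using dm by simp
  moreover have "int (dd k l) = gcd ?x (int N)" unfolding dd_def by simp
  ultimately have g2: "gcd ?x (int N) dvd gcd ?x (int m)" by (simp add: gcd_greatest)
  have "gcd ?x (int m) = gcd ?x (int N)" using g1 g2 by (simp add: zdvd_antisym_nonneg)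
  then show ?thesis unfolding dd_def by simp
qed

lemma dvd_m_of: "int (2 ^ dd k l - 1) dvd int (2 ^ m - 1) \<Longrightarrow> dd k l dvd m"
proof -
  assume "int (2 ^ dd k l - 1) dvd int (2 ^ m - 1)"
  then have dv: "(2::int) ^ dd k l - 1 dvd 2 ^ m - 1" by (simp add: of_nat_diff)
  have "gcd ((2::int) ^ dd k l - 1) (2 ^ m - 1) = 2 ^ gcd (dd k l) m - 1" by (rule gcd_two_pow_int)
  moreover have "gcd ((2::int) ^ dd k l - 1) (2 ^ m - 1) = 2 ^ dd k l - 1"
    using dv by (simp add: gcd_proj1_iff)
  ultimately have "(2::int) ^ gcd (dd k l) m = 2 ^ dd k l" by simp
  then have "gcd (dd k l) m = dd k l" by (simp add: power_inject_exp)
  then show "dd k l dvd m" by (metis gcd_dvd2)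
qed

lemma p2_C:
  assumes a: "a \<in> F" and b: "b \<in> F" and Lnz: "\<exists>x. Lf a b k l x \<noteq> 0"
  shows "(\<forall>u. Lf a b k l u = 0 \<longrightarrow> u \<in> F) \<longleftrightarrow>
    (a ^ ((2 ^ N - 1) div (2 ^ dd k l - 1)) \<noteq> b ^ ((2 ^ N - 1) div (2 ^ dd k l - 1)) \<or>
     (dd k l dvd m \<and> a ^ ((2 ^ m - 1) div (2 ^ dd k l - 1)) = b ^ ((2 ^ m - 1) div (2 ^ dd k l - 1))))"
proof (cases "a ^ ((2 ^ N - 1) div (2 ^ dd k l - 1)) = b ^ ((2 ^ N - 1) div (2 ^ dd k l - 1))")
  case False
  then have "\<not> (\<exists>u. u \<noteq> 0 \<and> a * u ^ (2 ^ k) = b * u ^ (2 ^ l))"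
    using KLK[of a k b l] unfolding dd_def by simp
  then have "\<forall>u. Lf a b k l u = 0 \<longrightarrow> u \<in> F" unfolding Lf_eq0 using F_0 by metis
  then show ?thesis using False by simp
next
  case True
  define D :: nat where "D = 2 ^ N - 1"
  define G :: nat where "G = 2 ^ dd k l - 1"
  define R :: nat where "R = D div G"
  have Dpos: "D > 0" unfolding D_def using D_pos .
  have Gpos: "G > 0" unfolding G_def using one_less_power[of "2::nat" "dd k l"] dd_pos by simp
  have DGR: "D = G * R" unfolding R_def using G_dvd_D[of k l] unfolding D_def[symmetric] G_def[symmetric]
    by (simp del: of_nat_diff)
  have Rpos: "R > 0" using DGR Dpos by (cases R) auto
  obtain u0 where u0: "u0 \<noteq> 0" "a * u0 ^ (2 ^ k) = b * u0 ^ (2 ^ l)"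
    using True KLK[of a k b l] unfolding dd_def by blast
  have anz: "a \<noteq> 0"
  proof
    assume "a = 0"
    then have "b = 0" using u0 by simp
    then show False using Lnz \<open>a = 0\<close> unfolding Lf_def by simp
  qed
  have bnz: "b \<noteq> 0"
  proof
    assume "b = 0"
    then have "a = 0" using u0 by simp
    then show False using anz by simp
  qed
  have rhs: "(a ^ ((2 ^ N - 1) div (2 ^ dd k l - 1)) \<noteq> b ^ ((2 ^ N - 1) div (2 ^ dd k l - 1)) \<or>
     (dd k l dvd m \<and> a ^ ((2 ^ m - 1) div (2 ^ dd k l - 1)) = b ^ ((2 ^ m - 1) div (2 ^ dd k l - 1))))
     \<longleftrightarrow> (dd k l dvd m \<and> a ^ ((2 ^ m - 1) div (2 ^ dd k l - 1)) = b ^ ((2 ^ m - 1) div (2 ^ dd k l - 1)))"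
    using True by simp
  have KLFd: "dd k l dvd m \<Longrightarrow> (\<exists>u. u \<in> F \<and> u \<noteq> 0 \<and> a * u ^ (2 ^ k) = b * u ^ (2 ^ l)) \<longleftrightarrow>
      a ^ ((2 ^ m - 1) div (2 ^ dd k l - 1)) = b ^ ((2 ^ m - 1) div (2 ^ dd k l - 1))"
    using KLF[OF a b, of k l] eF_eq by simp
  have "(\<forall>u. Lf a b k l u = 0 \<longrightarrow> u \<in> F) \<longleftrightarrow>
     (dd k l dvd m \<and> a ^ ((2 ^ m - 1) div (2 ^ dd k l - 1)) = b ^ ((2 ^ m - 1) div (2 ^ dd k l - 1)))"
  proof
    assume H: "\<forall>u. Lf a b k l u = 0 \<longrightarrow> u \<in> F"
    have u0F: "u0 \<in> F" using H u0(2) unfolding Lf_eq0 by blast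
    define w where "w = g ^ R"
    have wkl: "w ^ (2 ^ k) = w ^ (2 ^ l)"
    proof -
      have "int (2 ^ N - 1) dvd int (R * 2 ^ k) - int (R * 2 ^ l)"
      proof -
        have "int (R * 2 ^ k) - int (R * 2 ^ l) = int R * ((2::int) ^ k - 2 ^ l)" by (simp add: algebra_simps)
        moreover have "int G dvd (2::int) ^ k - 2 ^ l" unfolding G_def by (rule G_dvd_A)
        ultimately have "int R * int G dvd int (R * 2 ^ k) - int (R * 2 ^ l)" by simp
        then show ?thesis using DGR unfolding D_def by (simp add: mult.commute)
      qed
      then have "g ^ (R * 2 ^ k) = g ^ (R * 2 ^ l)" using gpow_eq by blast
      then show ?thesis unfolding w_def by (simp add: power_mult)
    qed
    have "Lf a b k l (u0 * w) = 0" unfolding Lf_eq0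
      by (simp add: power_mult_distrib wkl u0(2) mult.assoc[symmetric])
    then have "u0 * w \<in> F" using H by blast
    then have "u0 * w / u0 \<in> F" using u0F by (rule F_divide)
    then have wF: "w \<in> F" using u0(1) by simp
    have dm: "dd k l dvd m"
    proof -
      have "g ^ (R * 2 ^ m) = g ^ (R * 1)" using wF unfolding w_def by (simp add: inF power_mult)
      then have d1: "int D dvd int (R * 2 ^ m) - int (R * 1)" using gpow_eq unfolding D_def by blast
      have d2: "int (R * 2 ^ m) - int (R * 1) = int R * int (2 ^ m - 1)"
        using qm1_pos by (simp add: of_nat_diff algebra_simps)
      have d3: "int D = int R * int G" using DGR by simp
      have "int R * int G dvd int R * int (2 ^ m - 1)" using d1 unfolding d2 d3 .
      moreover have "int R \<noteq> 0" using Rpos by simp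
      ultimately have "int G dvd int (2 ^ m - 1)" by (metis dvd_mult_cancel_left)
      then show ?thesis unfolding G_def by (rule dvd_m_of)
    qed
    moreover have "a ^ ((2 ^ m - 1) div (2 ^ dd k l - 1)) = b ^ ((2 ^ m - 1) div (2 ^ dd k l - 1))"
      using KLFd[OF dm] u0F u0 by blast
    ultimately show "dd k l dvd m \<and> a ^ ((2 ^ m - 1) div (2 ^ dd k l - 1)) = b ^ ((2 ^ m - 1) div (2 ^ dd k l - 1))"
      by simp
  next
    assume H: "dd k l dvd m \<and> a ^ ((2 ^ m - 1) div (2 ^ dd k l - 1)) = b ^ ((2 ^ m - 1) div (2 ^ dd k l - 1))"
    then have dm: "dd k l dvd m" by simp
    obtain u1 where u1: "u1 \<in> F" "u1 \<noteq> 0" "a * u1 ^ (2 ^ k) = b * u1 ^ (2 ^ l)"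
      using KLFd[OF dm] H by blast
    have RqR: "Rq dvd R"
    proof -
      obtain c where c: "dd k l * c = m" using dm by (metis dvdE)
      have "(2::int) ^ dd k l - 1 dvd 2 ^ m - 1" using two_pow_dvd_int[of "dd k l" c] by (simp only: c)
      then have "int G dvd int (2 ^ m - 1)" unfolding G_def by (simp add: of_nat_diff)
      then have "G dvd 2 ^ m - 1" by (simp only: int_dvd_int_iff)
      then obtain c' where c': "2 ^ m - 1 = G * c'" by blast
      have "G * R = Rq * (2 ^ m - 1)" by (simp only: DGR[symmetric] D_def Rq_eq)
      also have "\<dots> = Rq * (G * c')" by (simp only: c')
      also have "\<dots> = G * (Rq * c')" by (simp add: ac_simps)
      finally have "G * R = G * (Rq * c')" .
      then have "R = Rq * c'" using Gpos by simp
      then show ?thesis by simp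
    qed
    show "\<forall>u. Lf a b k l u = 0 \<longrightarrow> u \<in> F"
    proof (intro allI impI)
      fix u assume Lu: "Lf a b k l u = 0"
      show "u \<in> F"
      proof (cases "u = 0")
        case False
        have eu: "a * u ^ (2 ^ k) = b * u ^ (2 ^ l)" using Lu unfolding Lf_eq0 .
        define w where "w = u / u1"
        have wnz: "w \<noteq> 0" unfolding w_def using False u1(2) by simp
        have wkl: "w ^ (2 ^ k) = w ^ (2 ^ l)"
        proof -
          have e1: "u ^ (2 ^ k) = (b / a) * u ^ (2 ^ l)" using eu anz by (simp add: field_simps)
          have e2: "u1 ^ (2 ^ k) = (b / a) * u1 ^ (2 ^ l)" using u1(3) anz by (simp add: field_simps)
          have "w ^ (2 ^ k) = u ^ (2 ^ k) / u1 ^ (2 ^ k)" unfolding w_def by (simp add: power_divide)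
          also have "\<dots> = ((b / a) * u ^ (2 ^ l)) / ((b / a) * u1 ^ (2 ^ l))" using e1 e2 by simp
          also have "\<dots> = u ^ (2 ^ l) / u1 ^ (2 ^ l)" using anz bnz by simp
          also have "\<dots> = w ^ (2 ^ l)" unfolding w_def by (simp add: power_divide)
          finally show ?thesis .
        qed
        obtain x where x: "w = g ^ x" using gen wnz by blast
        have "g ^ (x * 2 ^ k) = g ^ (x * 2 ^ l)" using wkl unfolding x by (simp add: power_mult)
        then have "int (2 ^ N - 1) dvd int (x * 2 ^ k) - int (x * 2 ^ l)" using gpow_eq by blast
        moreover have "int (x * 2 ^ k) - int (x * 2 ^ l) = int x * ((2::int) ^ k - 2 ^ l)" by (simp add: algebra_simps)
        ultimately have dv: "int D dvd int x * ((2::int) ^ k - 2 ^ l)" unfolding D_def by simp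
        have "int R dvd int x"
        proof (rule coprime_cancel_int[OF dv])
          show "gcd ((2::int) ^ k - 2 ^ l) (int D) = int G" unfolding D_def G_def by (rule gcd_A)
          show "int D = int G * int R" using DGR by simp
          show "int G > 0" using Gpos by simp
        qed
        then have "R dvd x" by simp
        then have "Rq dvd x" using RqR by (rule dvd_trans[rotated])
        then obtain y where y: "x = Rq * y" by blast
        have "w = hF ^ y" unfolding x y hF_def by (simp add: power_mult)
        then have "w \<in> F" using F_char by blast
        then have "w * u1 \<in> F" using u1(1) by (rule F_mult)
        moreover have "w * u1 = u" unfolding w_def using u1(2) by simp
        ultimately show ?thesis by simp
      qed simp
    qed
  qed
  then show ?thesis using rhs by simp
qed

lemma part2:
  assumes kl: "k mod m \<noteq> l mod m" and l1: "l mod m = 1 mod m"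
    and Lnz: "\<exists>x. a * x ^ (2 ^ k) + b * x ^ (2 ^ l) \<noteq> 0"
  shows "bij (\<lambda>x. T (x ^ (2 ^ m + 1)) + a * x ^ (2 ^ k) + b * x ^ (2 ^ l)) \<longleftrightarrow>
   (a \<in> F \<and> b \<in> F \<and>
    a ^ ((2 ^ m - 1) div (2 ^ nat (gcd (int k - 1) (int m)) - 1)) \<noteq>
    (b + 1) ^ ((2 ^ m - 1) div (2 ^ nat (gcd (int k - 1) (int m)) - 1)) \<and>
    (a ^ ((2 ^ N - 1) div (2 ^ dd k l - 1)) \<noteq> b ^ ((2 ^ N - 1) div (2 ^ dd k l - 1)) \<or>
     (dd k l dvd m \<and> a ^ ((2 ^ m - 1) div (2 ^ dd k l - 1)) = b ^ ((2 ^ m - 1) div (2 ^ dd k l - 1)))))"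
proof -
  have Lnz': "\<exists>x. Lf a b k l x \<noteq> 0" using Lnz unfolding Lf_def .
  show ?thesis
  proof (cases "a \<in> F \<and> b \<in> F")
    case True
    then have a: "a \<in> F" and b: "b \<in> F" by auto
    show ?thesis
      unfolding bij_iff p2_B[OF a b] p2_C[OF a b Lnz'] p2_D[OF a b l1] using a b by blast
  next
    case False
    have "\<not> (\<forall>u. u \<notin> F \<longrightarrow> Lf a b k l u \<notin> F)"
    proof
      assume C1: "\<forall>u. u \<notin> F \<longrightarrow> Lf a b k l u \<notin> F"
      have "a \<in> F \<and> b \<in> F" using p2_ab[OF kl l1 p2_A[OF C1]] .
      then show False using False by simp
    qed
    then show ?thesis unfolding bij_iff using False by blast
  qed
qed

end


theorem mainTheorem3:
  fixes a b :: "'a::{finite,field}" and m n k l :: nat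
  assumes m: "m \<ge> 1"
    and card: "card (UNIV :: 'a set) = 2 ^ (m * n)"
    and n_odd: "odd n"
    and k: "k < m * n" and l: "l < m * n"
    and L_nonzero: "\<exists>x::'a. a * x ^ (2 ^ k) + b * x ^ (2 ^ l) \<noteq> 0"
  defines "q \<equiv> (2::nat) ^ m"
    and "d \<equiv> nat (gcd (int l - int k) (int (m * n)))"
    and "s \<equiv> nat (gcd (int k - 1) (int m))"
  shows
   "(k mod m = l mod m \<longrightarrow>
      (perm_poly (\<lambda>x. Tr q n (x ^ (q + 1)) + a * x ^ (2 ^ k) + b * x ^ (2 ^ l)) \<longleftrightarrow>
        ((a + b \<in> subF q \<and> a + b \<noteq> 0 \<and> (a + b) ^ ((q - 1) div (2 ^ s - 1)) \<noteq> 1 \<and>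
          a ^ ((q ^ n - 1) div (2 ^ d - 1)) \<noteq> b ^ ((q ^ n - 1) div (2 ^ d - 1)))
         \<or> (a + b = 0 \<and> d = m \<and> Tr q n (inverse a) \<noteq> 0))))
    \<and> ((\<not> k mod m = l mod m \<and> l mod m = 1 mod m) \<longrightarrow>
      (perm_poly (\<lambda>x. Tr q n (x ^ (q + 1)) + a * x ^ (2 ^ k) + b * x ^ (2 ^ l)) \<longleftrightarrow>
        (a \<in> subF q \<and> b \<in> subF q \<and>
         a ^ ((q - 1) div (2 ^ s - 1)) \<noteq> (b + 1) ^ ((q - 1) div (2 ^ s - 1)) \<and>
         (a ^ ((q ^ n - 1) div (2 ^ d - 1)) \<noteq> b ^ ((q ^ n - 1) div (2 ^ d - 1))
          \<or> (d dvd m \<and> a ^ ((q - 1) div (2 ^ d - 1)) = b ^ ((q - 1) div (2 ^ d - 1)))))))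
    \<and> (b = 0 \<longrightarrow>
      (perm_poly (\<lambda>x. Tr q n (x ^ (q + 1)) + a * x ^ (2 ^ k)) \<longleftrightarrow>
        (a \<in> subF q \<and> a \<noteq> 0 \<and> a ^ ((q - 1) div (2 ^ s - 1)) \<noteq> 1)))"
proof -
  obtain g :: 'a where g1: "\<forall>x. x \<noteq> 0 \<longrightarrow> (\<exists>i. x = g ^ i)"
    and g2: "\<forall>i. g ^ i = 1 \<longleftrightarrow> (card (UNIV::'a set) - 1) dvd i"
    using gen_exists by blast
  interpret ffq "m * n" g m n
  proof
    show "card (UNIV::'a set) = 2 ^ (m * n)" by (rule card)
    show "\<And>x. x \<noteq> 0 \<Longrightarrow> \<exists>i. x = g ^ i" using g1 by blast
    show "\<And>i. g ^ i = 1 \<longleftrightarrow> (2 ^ (m * n) - 1) dvd i" using g2 card by simp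
    show "m \<ge> 1" by (rule m)
    show "m * n = m * n" ..
    show "odd n" by (rule n_odd)
  qed
  have qn2: "((2::nat) ^ m) ^ n = 2 ^ (m * n)" by (simp add: power_mult)
  have P1: "k mod m = l mod m \<longrightarrow>
      (perm_poly (\<lambda>x. Tr q n (x ^ (q + 1)) + a * x ^ (2 ^ k) + b * x ^ (2 ^ l)) \<longleftrightarrow>
        ((a + b \<in> subF q \<and> a + b \<noteq> 0 \<and> (a + b) ^ ((q - 1) div (2 ^ s - 1)) \<noteq> 1 \<and>
          a ^ ((q ^ n - 1) div (2 ^ d - 1)) \<noteq> b ^ ((q ^ n - 1) div (2 ^ d - 1)))
         \<or> (a + b = 0 \<and> d = m \<and> Tr q n (inverse a) \<noteq> 0)))"
  proof
    assume kl: "k mod m = l mod m"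
    show "perm_poly (\<lambda>x. Tr q n (x ^ (q + 1)) + a * x ^ (2 ^ k) + b * x ^ (2 ^ l)) \<longleftrightarrow>
        ((a + b \<in> subF q \<and> a + b \<noteq> 0 \<and> (a + b) ^ ((q - 1) div (2 ^ s - 1)) \<noteq> 1 \<and>
          a ^ ((q ^ n - 1) div (2 ^ d - 1)) \<noteq> b ^ ((q ^ n - 1) div (2 ^ d - 1)))
         \<or> (a + b = 0 \<and> d = m \<and> Tr q n (inverse a) \<noteq> 0))"
      unfolding perm_poly_def q_def d_def s_def qn2 by (rule part1[OF kl L_nonzero])
  qed
  have P2: "(\<not> k mod m = l mod m \<and> l mod m = 1 mod m) \<longrightarrow>
      (perm_poly (\<lambda>x. Tr q n (x ^ (q + 1)) + a * x ^ (2 ^ k) + b * x ^ (2 ^ l)) \<longleftrightarrow>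
        (a \<in> subF q \<and> b \<in> subF q \<and>
         a ^ ((q - 1) div (2 ^ s - 1)) \<noteq> (b + 1) ^ ((q - 1) div (2 ^ s - 1)) \<and>
         (a ^ ((q ^ n - 1) div (2 ^ d - 1)) \<noteq> b ^ ((q ^ n - 1) div (2 ^ d - 1))
          \<or> (d dvd m \<and> a ^ ((q - 1) div (2 ^ d - 1)) = b ^ ((q - 1) div (2 ^ d - 1))))))"
  proof
    assume kl: "\<not> k mod m = l mod m \<and> l mod m = 1 mod m"
    have "k mod m \<noteq> l mod m" "l mod m = 1 mod m" using kl by auto
    from part2[OF this L_nonzero]
    show "perm_poly (\<lambda>x. Tr q n (x ^ (q + 1)) + a * x ^ (2 ^ k) + b * x ^ (2 ^ l)) \<longleftrightarrow>
        (a \<in> subF q \<and> b \<in> subF q \<and>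
         a ^ ((q - 1) div (2 ^ s - 1)) \<noteq> (b + 1) ^ ((q - 1) div (2 ^ s - 1)) \<and>
         (a ^ ((q ^ n - 1) div (2 ^ d - 1)) \<noteq> b ^ ((q ^ n - 1) div (2 ^ d - 1))
          \<or> (d dvd m \<and> a ^ ((q - 1) div (2 ^ d - 1)) = b ^ ((q - 1) div (2 ^ d - 1)))))"
      unfolding perm_poly_def q_def d_def s_def qn2 dd_def .
  qed
  have P3: "b = 0 \<longrightarrow>
      (perm_poly (\<lambda>x. Tr q n (x ^ (q + 1)) + a * x ^ (2 ^ k)) \<longleftrightarrow>
        (a \<in> subF q \<and> a \<noteq> 0 \<and> a ^ ((q - 1) div (2 ^ s - 1)) \<noteq> 1))"
  proof
    assume b0: "b = 0"
    have Lnz: "\<exists>x::'a. a * x ^ (2 ^ k) + 0 * x ^ (2 ^ k) \<noteq> 0" using L_nonzero b0 by simp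
    have anz: "a \<noteq> 0" using L_nonzero b0 by auto
    have R: "bij (\<lambda>x. Tr (2 ^ m) n (x ^ (2 ^ m + 1)) + a * x ^ (2 ^ k) + 0 * x ^ (2 ^ k)) \<longleftrightarrow>
   ((a + 0 \<in> subF (2 ^ m) \<and> a + 0 \<noteq> 0 \<and> (a + 0) ^ ((2 ^ m - 1) div (2 ^ nat (gcd (int k - 1) (int m)) - 1)) \<noteq> 1 \<and>
      a ^ ((2 ^ (m * n) - 1) div (2 ^ nat (gcd (int k - int k) (int (m * n))) - 1)) \<noteq>
      0 ^ ((2 ^ (m * n) - 1) div (2 ^ nat (gcd (int k - int k) (int (m * n))) - 1)))
    \<or> (a + 0 = 0 \<and> nat (gcd (int k - int k) (int (m * n))) = m \<and> Tr (2 ^ m) n (inverse a) \<noteq> 0))"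
      by (rule part1[OF refl Lnz])
    have e1: "((2::nat) ^ (m * n) - 1) div (2 ^ nat (gcd (int k - int k) (int (m * n))) - 1) = 1"
    proof -
      have "gcd (int k - int k) (int (m * n)) = int (m * n)" by simp
      then have "nat (gcd (int k - int k) (int (m * n))) = m * n" by (simp only: nat_int)
      then show ?thesis using D_pos by simp
    qed
    have f: "(\<lambda>x. Tr (2 ^ m) n (x ^ (2 ^ m + 1)) + a * x ^ (2 ^ k) + 0 * x ^ (2 ^ k)) =
       (\<lambda>x::'a. Tr (2 ^ m) n (x ^ (2 ^ m + 1)) + a * x ^ (2 ^ k))" by simp
    show "perm_poly (\<lambda>x. Tr q n (x ^ (q + 1)) + a * x ^ (2 ^ k)) \<longleftrightarrow>
        (a \<in> subF q \<and> a \<noteq> 0 \<and> a ^ ((q - 1) div (2 ^ s - 1)) \<noteq> 1)"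
      unfolding perm_poly_def q_def s_def using R unfolding f e1 using anz by simp
  qed
  show ?thesis using P1 P2 P3 by blast
qed


end
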